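(* Let $A,B,W\ge1$ be integers. Let $x_{a,b}$ for $a\in[A]$, $b\in[B]$ be strings over an alphabet $\Sigma$ (with weight function $w$), each of total weight $\sum_i w(x_{a,b}[i])\le W$, and assume that no two symbols of $\bigcirc_{a,b}x_{a,b}$ match. Let $5,\bar5,6,\bar6,7,\bar7$ be new symbols not in $\Sigma$ (with $5,\bar5$ matching, etc.) with weights $w(5)=w(\bar5)=w(7)=w(\bar7)=4AW$ and $w(6)=w(\bar6)=8AW$. Set $\rho:=(8A+12)ABW$ and $$G(\{x_{a,b}\}):=5^B(6\,\bar5)^B\circ\Big(\mathop{\bigcirc}_{a\in[A]}\Big(\mathop{\bigcirc}_{b\in[B]}\bar6\,x_{a,b}\Big)\circ6^B\Big)\circ\bar6^B(7\,6)^B\bar7^B.$$ Then for all strings $y_1,y_2$ over $\Sigma$, $$\mathrm{WRNA}\big(y_1\,G(\{x_{a,b}\})\,y_2\big)=\rho+\max_{b\in[B]}\mathrm{WRNA}\Big(y_1\circ\Big(\mathop{\bigcirc}_{a\in[A]}x_{a,b}\Big)\circ y_2\Big).$$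
   Context: Each symbol $\sigma$ has a counterpart $\bar\sigma$ with $\bar{\bar\sigma}=\sigma$; $\sigma$ and $\bar\sigma$ match. Weights satisfy $w(\sigma)=w(\bar\sigma)\in\mathbb N$. Pairs $(i,j),(i',j')$ with $i<j$, $i'<j'$ cross if they share an index or $i<i'<j<j'$ or $i'<i<j'<j$. For a string $T$ of length $N$, $\mathrm{WRNA}(T)$ is the maximum of $\sum_{(i,j)\in R}w(T[i])$ over sets $R\subseteq\{(i,j):1\le i<j\le N\}$ of pairwise non-crossing pairs such that $T[i]$ and $T[j]$ match for every $(i,j)\in R$. $\circ$ and $\bigcirc$ denote concatenation; $s^B$ is $B$-fold repetition. *)

theory Defs
  imports Main
begin

text \<open>Strings are lists, positions are 0-based. Symbols live in a type 'a with an
involution bar; sigma and tau match iff tau = bar sigma. Weights w :: 'a => nat.\<close>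

definition crossing :: "nat \<times> nat \<Rightarrow> nat \<times> nat \<Rightarrow> bool" where
  "crossing p q \<longleftrightarrow>
     (let (i, j) = p; (i', j') = q in
       i = i' \<or> i = j' \<or> j = i' \<or> j = j' \<or> (i < i' \<and> i' < j \<and> j < j') \<or> (i' < i \<and> i < j' \<and> j' < j))"

definition valid_structure :: "('a \<Rightarrow> 'a) \<Rightarrow> 'a list \<Rightarrow> (nat \<times> nat) set \<Rightarrow> bool" where
  "valid_structure bar T R \<longleftrightarrow>
     R \<subseteq> {(i, j). i < j \<and> j < length T} \<and>
     (\<forall>(i, j) \<in> R. T ! j = bar (T ! i)) \<and>
     (\<forall>p \<in> R. \<forall>q \<in> R. p \<noteq> q \<longrightarrow> \<not> crossing p q)"

definition WRNA :: "('a \<Rightarrow> 'a) \<Rightarrow> ('a \<Rightarrow> nat) \<Rightarrow> 'a list \<Rightarrow> nat" where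
  "WRNA bar w T = Max ((\<lambda>R. \<Sum>(i, j) \<in> R. w (T ! i)) ` {R. valid_structure bar T R})"

definition G :: "('a \<Rightarrow> 'a) \<Rightarrow> 'a \<Rightarrow> 'a \<Rightarrow> 'a \<Rightarrow> nat \<Rightarrow> nat \<Rightarrow> (nat \<Rightarrow> nat \<Rightarrow> 'a list) \<Rightarrow> 'a list" where
  "G bar s5 s6 s7 A B x =
     replicate B s5 @ concat (replicate B [s6, bar s5]) @
     concat (map (\<lambda>a. concat (map (\<lambda>b. bar s6 # x a b) [1..<B+1]) @ replicate B s6) [1..<A+1]) @
     replicate B (bar s6) @ concat (replicate B [s7, s6]) @ replicate B (bar s7)"

end

theory Submission
  imports Defs "HOL-Library.Sublist"
begin

definition wt :: "('a \<Rightarrow> nat) \<Rightarrow> 'a list \<Rightarrow> (nat \<times> nat) set \<Rightarrow> nat" where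
  "wt w T R = (\<Sum>(i, j) \<in> R. w (T ! i))"

lemma valid_finite: "valid_structure bar T R \<Longrightarrow> finite R"
  unfolding valid_structure_def
  by (rule finite_subset[of _ "{..<length T} \<times> {..<length T}"]) auto

lemma valid_set_finite: "finite {R. valid_structure bar T R}"
  by (rule finite_subset[of _ "Pow ({..<length T} \<times> {..<length T})"])
     (auto simp: valid_structure_def)

lemma valid_empty: "valid_structure bar T {}"
  by (simp add: valid_structure_def)

lemma WRNA_ge: "valid_structure bar T R \<Longrightarrow> wt w T R \<le> WRNA bar w T"
  unfolding WRNA_def wt_def
  by (rule Max_ge) (use valid_set_finite in auto)

lemma WRNA_attain: "\<exists>R. valid_structure bar T R \<and> wt w T R = WRNA bar w T"
proof -
  have "WRNA bar w T \<in> (\<lambda>R. \<Sum>(i, j) \<in> R. w (T ! i)) ` {R. valid_structure bar T R}"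
    unfolding WRNA_def
    by (rule Max_in) (use valid_set_finite[of bar T] valid_empty[of bar T] in auto)
  then show ?thesis unfolding wt_def by auto
qed

lemma crossing_mono:
  assumes "strict_mono f"
  shows "crossing (f a, f b) (f c, f d) = crossing (a, b) (c, d)"
  using assms unfolding crossing_def by (simp add: strict_mono_less strict_mono_eq)

lemma transfer:
  assumes sm: "strict_mono f"
    and emb: "\<forall>i<length T'. f i < length T \<and> T ! (f i) = T' ! i"
    and v: "valid_structure bar T' R"
  shows "valid_structure bar T (map_prod f f ` R) \<and> wt w T (map_prod f f ` R) = wt w T' R"
proof
  have sub: "R \<subseteq> {(i, j). i < j \<and> j < length T'}" using v by (simp add: valid_structure_def)
  show "valid_structure bar T (map_prod f f ` R)"
    unfolding valid_structure_def
  proof (intro conjI)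
    show "map_prod f f ` R \<subseteq> {(i, j). i < j \<and> j < length T}"
      using sub emb sm by (auto simp: strict_mono_less)
    show "\<forall>(i, j)\<in>map_prod f f ` R. T ! j = bar (T ! i)"
    proof
      fix p assume "p \<in> map_prod f f ` R"
      then obtain a b where ab: "(a, b) \<in> R" "p = (f a, f b)" by auto
      then have "a < length T'" "b < length T'" using sub by auto
      then show "case p of (i, j) \<Rightarrow> T ! j = bar (T ! i)"
        using ab emb v by (auto simp: valid_structure_def)
    qed
    show "\<forall>p\<in>map_prod f f ` R. \<forall>q\<in>map_prod f f ` R. p \<noteq> q \<longrightarrow> \<not> crossing p q"
    proof (intro ballI impI)
      fix p q assume p: "p \<in> map_prod f f ` R" and q: "q \<in> map_prod f f ` R" and pq: "p \<noteq> q"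
      obtain a b where ab: "(a, b) \<in> R" "p = (f a, f b)" using p by auto
      obtain c d where cd: "(c, d) \<in> R" "q = (f c, f d)" using q by auto
      have "(a, b) \<noteq> (c, d)" using pq ab cd by auto
      then have "\<not> crossing (a, b) (c, d)" using v ab cd by (auto simp: valid_structure_def)
      then show "\<not> crossing p q" using ab cd crossing_mono[OF sm] by simp
    qed
  qed
  have inj: "inj_on (map_prod f f) R"
    using sm by (auto simp: inj_on_def strict_mono_eq)
  have "wt w T (map_prod f f ` R) = (\<Sum>(i, j) \<in> R. w (T ! f i))"
    unfolding wt_def by (subst sum.reindex[OF inj]) (simp add: case_prod_beta)
  also have "\<dots> = wt w T' R"
    unfolding wt_def using sub emb by (intro sum.cong) auto
  finally show "wt w T (map_prod f f ` R) = wt w T' R" .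
qed

lemma restrict:
  assumes sm: "strict_mono f"
    and emb: "\<forall>i<length T'. f i < length T \<and> T ! (f i) = T' ! i"
    and v: "valid_structure bar T S"
    and cov: "\<forall>(i, j)\<in>S. i \<in> f ` {..<length T'} \<and> j \<in> f ` {..<length T'}"
  shows "wt w T S \<le> WRNA bar w T'"
proof -
  define S' where "S' = {(i, j). i < length T' \<and> j < length T' \<and> (f i, f j) \<in> S}"
  have img: "map_prod f f ` S' = S"
  proof
    show "map_prod f f ` S' \<subseteq> S" by (auto simp: S'_def)
    show "S \<subseteq> map_prod f f ` S'"
    proof
      fix p assume "p \<in> S"
      then obtain i j where p: "p = (i, j)" "(i, j) \<in> S" by (cases p) auto
      then obtain i' j' where "i' < length T'" "j' < length T'" "i = f i'" "j = f j'"
        using cov by blast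
      then show "p \<in> map_prod f f ` S'" using p by (auto simp: S'_def image_iff)
    qed
  qed
  have vS: "valid_structure bar T' S'"
    unfolding valid_structure_def
  proof (intro conjI)
    show "S' \<subseteq> {(i, j). i < j \<and> j < length T'}"
      using v sm by (auto simp: S'_def valid_structure_def strict_mono_less)
    show "\<forall>(i, j)\<in>S'. T' ! j = bar (T' ! i)"
      using v emb by (auto simp: S'_def valid_structure_def)
    show "\<forall>p\<in>S'. \<forall>q\<in>S'. p \<noteq> q \<longrightarrow> \<not> crossing p q"
    proof (intro ballI impI)
      fix p q assume pq: "p \<in> S'" "q \<in> S'" "p \<noteq> q"
      obtain a b c d where ab: "p = (a, b)" "q = (c, d)" by (cases p, cases q) auto
      have "(f a, f b) \<noteq> (f c, f d)" using pq ab sm by (auto simp: strict_mono_eq)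
      then have "\<not> crossing (f a, f b) (f c, f d)"
        using v pq ab by (auto simp: S'_def valid_structure_def)
      then show "\<not> crossing p q" using ab crossing_mono[OF sm] by simp
    qed
  qed
  have "wt w T S = wt w T' S'"
    using transfer[OF sm emb vS] img by simp
  also have "\<dots> \<le> WRNA bar w T'" by (rule WRNA_ge[OF vS])
  finally show ?thesis .
qed

lemma subseq_emb:
  "subseq xs ys \<Longrightarrow> \<exists>f. strict_mono f \<and> (\<forall>i<length xs. f i < length ys \<and> ys ! (f i) = xs ! i)"
proof (induction rule: list_emb.induct)
  case (list_emb_Nil ys)
  then show ?case by (intro exI[of _ id]) (simp add: strict_mono_def)
next
  case (list_emb_Cons xs ys y)
  then obtain f where f: "strict_mono f" "\<forall>i<length xs. f i < length ys \<and> ys ! (f i) = xs ! i" by blast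
  show ?case
    by (rule exI[of _ "Suc \<circ> f"]) (use f in \<open>auto simp: strict_mono_def\<close>)
next
  case (list_emb_Cons2 x y xs ys)
  then obtain f where f: "strict_mono f" "\<forall>i<length xs. f i < length ys \<and> ys ! (f i) = xs ! i" by blast
  define g where "g = (\<lambda>i. case i of 0 \<Rightarrow> 0 | Suc k \<Rightarrow> Suc (f k))"
  have "strict_mono g"
    unfolding strict_mono_Suc_iff g_def
  proof
    fix n show "(case n of 0 \<Rightarrow> 0 | Suc k \<Rightarrow> Suc (f k)) < (case Suc n of 0 \<Rightarrow> 0 | Suc k \<Rightarrow> Suc (f k))"
      using f(1) by (cases n) (auto simp: strict_mono_def)
  qed
  moreover have "\<forall>i<length (x # xs). g i < length (y # ys) \<and> (y # ys) ! (g i) = (x # xs) ! i"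
    using f list_emb_Cons2.hyps(1) by (auto simp: g_def nth_Cons split: nat.splits)
  ultimately show ?case by blast
qed

lemma WRNA_subseq:
  assumes "subseq u v" shows "WRNA bar w u \<le> WRNA bar w v"
proof -
  obtain f where f: "strict_mono f" "\<forall>i<length u. f i < length v \<and> v ! (f i) = u ! i"
    using subseq_emb[OF assms] by blast
  obtain R where R: "valid_structure bar u R" "wt w u R = WRNA bar w u" using WRNA_attain by blast
  from transfer[OF f R(1)] have "valid_structure bar v (map_prod f f ` R)"
    "wt w v (map_prod f f ` R) = wt w u R" by auto
  with R WRNA_ge show ?thesis by metis
qed

lemma wt_union:
  assumes "finite R1" "finite R2" "R1 \<inter> R2 = {}"
  shows "wt w T (R1 \<union> R2) = wt w T R1 + wt w T R2"
  unfolding wt_def using assms by (rule sum.union_disjoint)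

lemma WRNA_insert:
  "WRNA bar w (U @ V) + WRNA bar w S \<le> WRNA bar w (U @ S @ V)"
proof -
  obtain R1 where R1: "valid_structure bar (U @ V) R1" "wt w (U @ V) R1 = WRNA bar w (U @ V)"
    using WRNA_attain by blast
  obtain R2 where R2: "valid_structure bar S R2" "wt w S R2 = WRNA bar w S"
    using WRNA_attain by blast
  define f1 where "f1 = (\<lambda>i. if i < length U then i else i + length S)"
  define f2 where "f2 = (\<lambda>i. length U + i)"
  have sm1: "strict_mono f1" by (auto simp: strict_mono_def f1_def)
  have sm2: "strict_mono f2" by (auto simp: strict_mono_def f2_def)
  have e1: "\<forall>i<length (U @ V). f1 i < length (U @ S @ V) \<and> (U @ S @ V) ! (f1 i) = (U @ V) ! i"
  proof (intro allI impI)
    fix i assume i: "i < length (U @ V)"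
    show "f1 i < length (U @ S @ V) \<and> (U @ S @ V) ! (f1 i) = (U @ V) ! i"
    proof (cases "i < length U")
      case True then show ?thesis by (simp add: f1_def nth_append)
    next
      case False
      then have "f1 i = length U + length S + (i - length U)" by (simp add: f1_def)
      moreover have "(U @ S @ V) ! (length U + length S + (i - length U)) = V ! (i - length U)"
        by (metis append_assoc length_append nth_append_length_plus)
      ultimately show ?thesis using i False by (simp add: nth_append)
    qed
  qed
  have e2: "\<forall>i<length S. f2 i < length (U @ S @ V) \<and> (U @ S @ V) ! (f2 i) = S ! i"
    by (auto simp: f2_def nth_append)
  define Q1 where "Q1 = map_prod f1 f1 ` R1"
  define Q2 where "Q2 = map_prod f2 f2 ` R2"
  have t1: "valid_structure bar (U @ S @ V) Q1" "wt w (U @ S @ V) Q1 = wt w (U @ V) R1"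
    using transfer[OF sm1 e1 R1(1)] by (auto simp: Q1_def)
  have t2: "valid_structure bar (U @ S @ V) Q2" "wt w (U @ S @ V) Q2 = wt w S R2"
    using transfer[OF sm2 e2 R2(1)] by (auto simp: Q2_def)
  have out1: "\<forall>(i, j)\<in>Q1. (i < length U \<or> i \<ge> length U + length S) \<and> (j < length U \<or> j \<ge> length U + length S)"
    by (auto simp: Q1_def f1_def split: if_splits)
  have in2: "\<forall>(i, j)\<in>Q2. length U \<le> i \<and> i < length U + length S \<and> length U \<le> j \<and> j < length U + length S"
    using R2(1) by (auto simp: Q2_def f2_def valid_structure_def)
  have disj: "Q1 \<inter> Q2 = {}" using out1 in2 by fastforce
  have vU: "valid_structure bar (U @ S @ V) (Q1 \<union> Q2)"
    unfolding valid_structure_def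
  proof (intro conjI)
    show "Q1 \<union> Q2 \<subseteq> {(i, j). i < j \<and> j < length (U @ S @ V)}"
      using t1(1) t2(1) by (auto simp: valid_structure_def)
    show "\<forall>(i, j)\<in>Q1 \<union> Q2. (U @ S @ V) ! j = bar ((U @ S @ V) ! i)"
      using t1(1) t2(1) by (auto simp: valid_structure_def)
    show "\<forall>p\<in>Q1 \<union> Q2. \<forall>q\<in>Q1 \<union> Q2. p \<noteq> q \<longrightarrow> \<not> crossing p q"
    proof (intro ballI impI)
      fix p q assume pq: "p \<in> Q1 \<union> Q2" "q \<in> Q1 \<union> Q2" "p \<noteq> q"
      obtain a b c d where ab: "p = (a, b)" "q = (c, d)" by (cases p, cases q) auto
      consider "p \<in> Q1" "q \<in> Q1" | "p \<in> Q2" "q \<in> Q2" | "p \<in> Q1" "q \<in> Q2" | "p \<in> Q2" "q \<in> Q1"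
        using pq by blast
      then show "\<not> crossing p q"
      proof cases
        case 1 then show ?thesis using t1(1) pq by (auto simp: valid_structure_def)
      next
        case 2 then show ?thesis using t2(1) pq by (auto simp: valid_structure_def)
      next
        case 3
        then have "(a < length U \<or> a \<ge> length U + length S) \<and> (b < length U \<or> b \<ge> length U + length S)"
          "length U \<le> c \<and> c < length U + length S \<and> length U \<le> d \<and> d < length U + length S"
          using out1 in2 ab by auto
        then show ?thesis using ab by (auto simp: crossing_def)
      next
        case 4
        then have "(c < length U \<or> c \<ge> length U + length S) \<and> (d < length U \<or> d \<ge> length U + length S)"
          "length U \<le> a \<and> a < length U + length S \<and> length U \<le> b \<and> b < length U + length S"
          using out1 in2 ab by auto
        then show ?thesis using ab by (auto simp: crossing_def)
      qed
    qed
  qed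
  have "wt w (U @ S @ V) (Q1 \<union> Q2) = wt w (U @ S @ V) Q1 + wt w (U @ S @ V) Q2"
    using valid_finite[OF t1(1)] valid_finite[OF t2(1)] disj by (rule wt_union)
  then have "WRNA bar w (U @ V) + WRNA bar w S = wt w (U @ S @ V) (Q1 \<union> Q2)"
    using t1 t2 R1 R2 by simp
  also have "\<dots> \<le> WRNA bar w (U @ S @ V)" by (rule WRNA_ge[OF vU])
  finally show ?thesis .
qed

lemma WRNA_append: "WRNA bar w U + WRNA bar w V \<le> WRNA bar w (U @ V)"
  using WRNA_insert[of bar w U "[]" V] by simp

lemma WRNA_nest:
  assumes wb: "w (bar \<sigma>) = w \<sigma>"
  shows "WRNA bar w U + w \<sigma> \<le> WRNA bar w (\<sigma> # U @ [bar \<sigma>])"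
proof -
  obtain R where R: "valid_structure bar U R" "wt w U R = WRNA bar w U" using WRNA_attain by blast
  define T where "T = \<sigma> # U @ [bar \<sigma>]"
  have sm: "strict_mono Suc" by (simp add: strict_mono_def)
  have e: "\<forall>i<length U. Suc i < length T \<and> T ! (Suc i) = U ! i"
    by (auto simp: T_def nth_append)
  define Q where "Q = map_prod Suc Suc ` R"
  have t: "valid_structure bar T Q" "wt w T Q = wt w U R"
    using transfer[OF sm e R(1)] by (auto simp: Q_def)
  have inQ: "\<forall>(i, j)\<in>Q. 0 < i \<and> i < j \<and> j < length U + 1"
    using R(1) by (auto simp: Q_def valid_structure_def)
  have nQ: "(0, length U + 1) \<notin> Q" using inQ by auto
  have v: "valid_structure bar T (insert (0, length U + 1) Q)"
    unfolding valid_structure_def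
  proof (intro conjI)
    show "insert (0, length U + 1) Q \<subseteq> {(i, j). i < j \<and> j < length T}"
      using t(1) by (auto simp: valid_structure_def T_def)
    show "\<forall>(i, j)\<in>insert (0, length U + 1) Q. T ! j = bar (T ! i)"
      using t(1) by (auto simp: valid_structure_def T_def nth_append)
    show "\<forall>p\<in>insert (0, length U + 1) Q. \<forall>q\<in>insert (0, length U + 1) Q. p \<noteq> q \<longrightarrow> \<not> crossing p q"
    proof (intro ballI impI)
      fix p q assume pq: "p \<in> insert (0, length U + 1) Q" "q \<in> insert (0, length U + 1) Q" "p \<noteq> q"
      obtain a b c d where ab: "p = (a, b)" "q = (c, d)" by (cases p, cases q) auto
      show "\<not> crossing p q"
      proof (cases "p \<in> Q \<and> q \<in> Q")
        case True then show ?thesis using t(1) pq by (auto simp: valid_structure_def)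
      next
        case False
        then consider "p = (0, length U + 1)" "q \<in> Q" | "q = (0, length U + 1)" "p \<in> Q" using pq by auto
        then show ?thesis
        proof cases
          case 1 then have "0 < c \<and> c < d \<and> d < length U + 1" using inQ ab by auto
          then show ?thesis using 1 ab by (auto simp: crossing_def)
        next
          case 2 then have "0 < a \<and> a < b \<and> b < length U + 1" using inQ ab by auto
          then show ?thesis using 2 ab by (auto simp: crossing_def)
        qed
      qed
    qed
  qed
  have "wt w T (insert (0, length U + 1) Q) = w (T ! 0) + wt w T Q"
    unfolding wt_def using valid_finite[OF t(1)] nQ by simp
  then have "WRNA bar w U + w \<sigma> = wt w T (insert (0, length U + 1) Q)"
    using t R by (simp add: T_def)
  also have "\<dots> \<le> WRNA bar w T" by (rule WRNA_ge[OF v])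
  finally show ?thesis by (simp add: T_def)
qed

lemma WRNA_pow:
  assumes wb: "w (bar \<sigma>) = w \<sigma>"
  shows "n * w \<sigma> \<le> WRNA bar w (replicate n \<sigma> @ replicate n (bar \<sigma>))"
proof (induction n)
  case 0 then show ?case by simp
next
  case (Suc n)
  have eq: "replicate (Suc n) \<sigma> @ replicate (Suc n) (bar \<sigma>) = \<sigma> # (replicate n \<sigma> @ replicate n (bar \<sigma>)) @ [bar \<sigma>]"
    by (simp add: replicate_append_same)
  show ?case using Suc WRNA_nest[where w=w and bar=bar and \<sigma>=\<sigma> and U="replicate n \<sigma> @ replicate n (bar \<sigma>)", OF wb] eq by simp
qed

declare upt_Suc[simp del]

locale wsetup =
  fixes bar :: "'a \<Rightarrow> 'a" and w :: "'a \<Rightarrow> nat" and \<Sigma> :: "'a set"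
    and A B W :: nat and x :: "nat \<Rightarrow> nat \<Rightarrow> 'a list" and s5 s6 s7 :: 'a
    and y1 y2 :: "'a list"
  assumes bar_inv: "\<And>\<sigma>. bar (bar \<sigma>) = \<sigma>"
    and w_bar: "\<And>\<sigma>. w (bar \<sigma>) = w \<sigma>"
    and Sigma_closed: "\<And>\<sigma>. \<sigma> \<in> \<Sigma> \<Longrightarrow> bar \<sigma> \<in> \<Sigma>"
    and A: "A \<ge> 1" and B: "B \<ge> 1" and W: "W \<ge> 1"
    and x_Sigma: "\<And>a b. a \<in> {1..A} \<Longrightarrow> b \<in> {1..B} \<Longrightarrow> set (x a b) \<subseteq> \<Sigma>"
    and x_weight: "\<And>a b. a \<in> {1..A} \<Longrightarrow> b \<in> {1..B} \<Longrightarrow> sum_list (map w (x a b)) \<le> W"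
    and no_match: "let X = concat (map (\<lambda>a. concat (map (\<lambda>b. x a b) [1..<B+1])) [1..<A+1])
                   in \<forall>i j. i < j \<and> j < length X \<longrightarrow> X ! j \<noteq> bar (X ! i)"
    and new_distinct: "distinct [s5, bar s5, s6, bar s6, s7, bar s7]"
    and new_fresh: "s5 \<notin> \<Sigma>" "bar s5 \<notin> \<Sigma>" "s6 \<notin> \<Sigma>" "bar s6 \<notin> \<Sigma>"
                   "s7 \<notin> \<Sigma>" "bar s7 \<notin> \<Sigma>"
    and w5: "w s5 = 4 * A * W" and w6: "w s6 = 8 * A * W" and w7: "w s7 = 4 * A * W"
    and y1_Sigma: "set y1 \<subseteq> \<Sigma>" and y2_Sigma: "set y2 \<subseteq> \<Sigma>"

lemma subseq_rep_le: "m \<le> n \<Longrightarrow> subseq (replicate m c) (replicate n c)"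
proof -
  assume "m \<le> n"
  then have "replicate n c = replicate m c @ replicate (n - m) c"
    by (metis le_add_diff_inverse replicate_add)
  then show ?thesis by (metis list_emb_prefix subseq_order.refl)
qed

lemma subseq_rep_concat: "subseq (replicate (length l) c) (concat (map (\<lambda>i. c # f i) l))"
  by (induction l) (auto intro: list_emb_append2)

lemma subseq_pair_first: "subseq (replicate n p) (concat (replicate n [p, q]))"
  by (induction n) auto

lemma subseq_pair_second: "subseq (replicate n q) (concat (replicate n [p, q]))"
  by (induction n) auto

lemma subseq_pair_split:
  assumes "k \<le> n"
  shows "subseq (replicate (n - k) q @ replicate k p) (concat (replicate n [p, q]))"
proof -
  have "concat (replicate n [p, q]) = concat (replicate (n - k) [p, q]) @ concat (replicate k [p, q])"
    using assms by (metis concat_append le_add_diff_inverse2 replicate_add)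
  then show ?thesis
    using list_emb_append_mono[OF subseq_pair_second subseq_pair_first] by metis
qed

lemma subseq_concat_map:
  "(\<And>a. a \<in> set as \<Longrightarrow> subseq (f a) (g a)) \<Longrightarrow> subseq (concat (map f as)) (concat (map g as))"
  by (induction as) (auto intro: list_emb_append_mono)

lemma shift_concat: "concat (map (\<lambda>a. q @ g a) as) @ q = q @ concat (map (\<lambda>a. g a @ q) as)"
  by (induction as) auto

lemma upt_split: "1 \<le> b \<Longrightarrow> b \<le> B \<Longrightarrow> [1..<B+1] = [1..<b] @ b # [b+1..<B+1]"
proof -
  assume b: "1 \<le> b" "b \<le> B"
  have "[1..<b + (B + 1 - b)] = [1..<b] @ [b..<b + (B + 1 - b)]"
    using b by (intro upt_add_eq_append) simp
  moreover have "[b..<B + 1] = b # [b+1..<B+1]" using b by (simp add: upt_conv_Cons)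
  ultimately show ?thesis using b by simp
qed

lemma WRNA_concat_insert:
  "WRNA bar w (u @ concat (map f as) @ v) + length as * WRNA bar w M
     \<le> WRNA bar w (u @ concat (map (\<lambda>a. f a @ M) as) @ v)"
proof (induction as arbitrary: u)
  case Nil then show ?case by simp
next
  case (Cons a as)
  have "WRNA bar w ((u @ f a @ M) @ concat (map f as) @ v) + length as * WRNA bar w M
      \<le> WRNA bar w ((u @ f a @ M) @ concat (map (\<lambda>a. f a @ M) as) @ v)" by (rule Cons.IH)
  moreover have "WRNA bar w ((u @ f a) @ concat (map f as) @ v) + WRNA bar w M
      \<le> WRNA bar w ((u @ f a) @ M @ concat (map f as) @ v)" by (rule WRNA_insert)
  ultimately show ?case by (simp add: algebra_simps)
qed

context wsetup begin

abbreviation "GG \<equiv> G bar s5 s6 s7 A B x"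
abbreviation "XX b \<equiv> concat (map (\<lambda>a. x a b) [1..<A+1])"

lemma G_sub:
  assumes b: "1 \<le> b" "b \<le> B"
  defines "p \<equiv> replicate b s6" and "q \<equiv> replicate b (bar s6)"
    and "N \<equiv> replicate (B - b) (bar s6) @ replicate (B - b) s6"
  shows "subseq (replicate (B - b) s5 @ replicate (B - b) (bar s5) @ p @ q
            @ concat (map (\<lambda>a. x a b @ N @ p @ q) [1..<A+1])
            @ N @ replicate b s7 @ replicate b (bar s7)) GG"
proof -
  let ?as = "[1..<A+1]"
  have Q: "subseq (q @ x a b @ N @ p)
       (concat (map (\<lambda>c. bar s6 # x a c) [1..<B+1]) @ replicate B s6)" for a
  proof -
    have e1: "concat (map (\<lambda>c. bar s6 # x a c) [1..<B+1])
        = concat (map (\<lambda>c. bar s6 # x a c) [1..<b]) @ (bar s6 # x a b) @ concat (map (\<lambda>c. bar s6 # x a c) [b+1..<B+1])"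
      unfolding upt_split[OF b] by (simp only: map_append concat_append list.map concat.simps append_assoc)
    have r1: "subseq (replicate (b - 1) (bar s6)) (concat (map (\<lambda>c. bar s6 # x a c) [1..<b]))"
      by (rule subseq_rep_concat[of "[1..<b]", unfolded length_upt])
    have e: "B + 1 - (b + 1) = B - b" by simp
    have r2: "subseq (replicate (B - b) (bar s6)) (concat (map (\<lambda>c. bar s6 # x a c) [b+1..<B+1]))"
      by (rule subseq_rep_concat[of "[b+1..<B+1]", unfolded length_upt e])
    have sub: "subseq (replicate (b - 1) (bar s6) @ (bar s6 # x a b) @ replicate (B - b) (bar s6))
        (concat (map (\<lambda>c. bar s6 # x a c) [1..<B+1]))"
      unfolding e1 by (rule list_emb_append_mono[OF r1 list_emb_append_mono[OF subseq_order.refl r2]])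
    have e2: "replicate (b - 1) (bar s6) @ (bar s6 # x a b) @ replicate (B - b) (bar s6)
        = q @ x a b @ replicate (B - b) (bar s6)"
      using b(1) unfolding q_def by (cases b) (simp_all add: replicate_app_Cons_same)
    have e3: "replicate B s6 = replicate (B - b) s6 @ p"
      using b(2) unfolding p_def replicate_add[symmetric] by simp
    from list_emb_append_mono[OF sub[unfolded e2] subseq_order.refl[of "replicate (B - b) s6 @ p"]]
    show ?thesis unfolding N_def e3 by (simp only: append_assoc)
  qed
  have L: "subseq (replicate (B - b) s5 @ (replicate (B - b) (bar s5) @ p)
      @ concat (map (\<lambda>a. q @ x a b @ N @ p) ?as) @ (q @ replicate (B - b) (bar s6))
      @ (replicate (B - b) s6 @ replicate b s7) @ replicate b (bar s7)) GG"
    unfolding G_def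
    apply (intro list_emb_append_mono)
         apply (rule subseq_rep_le; simp)
        apply (unfold p_def, rule subseq_pair_split, rule b(2))
       apply (rule subseq_concat_map, rule Q[unfolded p_def])
      apply (unfold q_def, metis b(2) le_add_diff_inverse replicate_add subseq_order.refl)
     apply (rule subseq_pair_split, rule b(2))
    apply (rule subseq_rep_le, rule b(2))
    done
  have "replicate (B - b) s5 @ (replicate (B - b) (bar s5) @ p)
      @ concat (map (\<lambda>a. q @ x a b @ N @ p) ?as) @ (q @ replicate (B - b) (bar s6))
      @ (replicate (B - b) s6 @ replicate b s7) @ replicate b (bar s7)
    = replicate (B - b) s5 @ replicate (B - b) (bar s5) @ p @ (concat (map (\<lambda>a. q @ (x a b @ N @ p)) ?as) @ q)
      @ N @ replicate b s7 @ replicate b (bar s7)"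
    by (simp add: N_def)
  also have "\<dots> = replicate (B - b) s5 @ replicate (B - b) (bar s5) @ p @ q
            @ concat (map (\<lambda>a. x a b @ N @ p @ q) [1..<A+1])
            @ N @ replicate b s7 @ replicate b (bar s7)"
    by (subst shift_concat) (simp only: append_assoc)
  finally show ?thesis using L by (simp only:)
qed

lemma lower:
  assumes b: "1 \<le> b" "b \<le> B"
  shows "(8 * A + 12) * A * B * W + WRNA bar w (y1 @ XX b @ y2) \<le> WRNA bar w (y1 @ GG @ y2)"
proof -
  define p where "p = replicate b s6"
  define q where "q = replicate b (bar s6)"
  define N where "N = replicate (B - b) (bar s6) @ replicate (B - b) s6"
  define K where "K = replicate (B - b) s5 @ replicate (B - b) (bar s5) @ p @ q"
  define M where "M = N @ p @ q"
  define E where "E = N @ replicate b s7 @ replicate b (bar s7)"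
  define C where "C = concat (map (\<lambda>a. x a b @ M) [1..<A+1])"
  have sub: "subseq (K @ C @ E) GG"
    using G_sub[OF b] by (simp add: K_def C_def E_def M_def p_def q_def N_def)
  have s1: "WRNA bar w (y1 @ K @ C @ E @ y2) \<le> WRNA bar w (y1 @ GG @ y2)"
  proof -
    have "subseq (y1 @ (K @ C @ E) @ y2) (y1 @ GG @ y2)" using sub by (simp only: subseq_append' subseq_append)
    then show ?thesis by (intro WRNA_subseq) simp
  qed
  have s2: "WRNA bar w (y1 @ C @ E @ y2) + WRNA bar w K \<le> WRNA bar w (y1 @ K @ C @ E @ y2)"
    using WRNA_insert[of bar w y1 "C @ E @ y2" K] by simp
  have s3: "WRNA bar w (y1 @ C @ y2) + WRNA bar w E \<le> WRNA bar w (y1 @ C @ E @ y2)"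
    using WRNA_insert[of bar w "y1 @ C" y2 E] by simp
  have s4: "WRNA bar w (y1 @ XX b @ y2) + A * WRNA bar w M \<le> WRNA bar w (y1 @ C @ y2)"
  proof -
    have "WRNA bar w (y1 @ XX b @ y2) + length [1..<A+1] * WRNA bar w M \<le> WRNA bar w (y1 @ C @ y2)"
      unfolding C_def by (rule WRNA_concat_insert)
    moreover have "length [1..<A+1] = A" by simp
    ultimately show ?thesis by simp
  qed
  have wb6: "w (bar (bar s6)) = w (bar s6)" by (simp add: w_bar)
  have P6: "n * w s6 \<le> WRNA bar w (replicate n s6 @ replicate n (bar s6))" for n
    by (rule WRNA_pow) (rule w_bar)
  have P6b: "n * w s6 \<le> WRNA bar w (replicate n (bar s6) @ replicate n s6)" for n
    using WRNA_pow[of w bar "bar s6" n, OF wb6] by (simp add: bar_inv w_bar)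
  have P5: "n * w s5 \<le> WRNA bar w (replicate n s5 @ replicate n (bar s5))" for n
    by (rule WRNA_pow) (rule w_bar)
  have P7: "n * w s7 \<le> WRNA bar w (replicate n s7 @ replicate n (bar s7))" for n
    by (rule WRNA_pow) (rule w_bar)
  have k: "(B - b) * w s5 + b * w s6 \<le> WRNA bar w K"
    using WRNA_append[of bar w "replicate (B - b) s5 @ replicate (B - b) (bar s5)" "p @ q"] P5 P6
    by (simp add: K_def p_def q_def) (meson add_le_mono order_trans)
  have m: "(B - b) * w s6 + b * w s6 \<le> WRNA bar w M"
    using WRNA_append[of bar w N "p @ q"] P6b P6
    by (simp add: M_def N_def p_def q_def) (meson add_le_mono order_trans)
  have e: "(B - b) * w s6 + b * w s7 \<le> WRNA bar w E"
    using WRNA_append[of bar w N "replicate b s7 @ replicate b (bar s7)"] P6b P7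
    by (simp add: E_def N_def) (meson add_le_mono order_trans)
  obtain d where d: "B = b + d" using b(2) le_Suc_ex by blast
  have "(8 * A + 12) * A * B * W = ((B - b) * w s5 + b * w s6) + A * ((B - b) * w s6 + b * w s6) + ((B - b) * w s6 + b * w s7)"
    by (simp add: d w5 w6 w7 algebra_simps)
  also have "\<dots> \<le> WRNA bar w K + A * WRNA bar w M + WRNA bar w E"
    using k m e by (intro add_mono mult_le_mono2) auto
  finally show ?thesis using s1 s2 s3 s4 by linarith
qed

end

declare upt_Suc[simp del]

fun lab :: "('l \<times> 'a list) list \<Rightarrow> nat \<Rightarrow> 'l" where
  "lab [] p = undefined"
| "lab ((l, s) # cs) p = (if p < length s then l else lab cs (p - length s))"

lemma lab_mem:
  "p < length (concat (map snd cs)) \<Longrightarrow>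
     \<exists>s. (lab cs p, s) \<in> set cs \<and> concat (map snd cs) ! p \<in> set s"
proof (induction cs arbitrary: p)
  case Nil then show ?case by simp
next
  case (Cons c cs)
  obtain l s where c: "c = (l, s)" by (cases c)
  show ?case
  proof (cases "p < length s")
    case True then show ?thesis using c by (auto simp: nth_append)
  next
    case False
    then have "p - length s < length (concat (map snd cs))" using Cons.prems c by simp
    from Cons.IH[OF this] False c show ?thesis by (auto simp: nth_append)
  qed
qed

lemma lab_pos:
  "p < length (concat (map snd cs)) \<Longrightarrow>
     \<exists>xs s ys k. cs = xs @ (lab cs p, s) # ys \<and> k < length s \<and> p = length (concat (map snd xs)) + k"
proof (induction cs arbitrary: p)
  case Nil then show ?case by simp
next
  case (Cons c cs)
  obtain l s where c: "c = (l, s)" by (cases c)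
  show ?case
  proof (cases "p < length s")
    case True then show ?thesis using c by (intro exI[of _ "[]"] exI[of _ s] exI[of _ cs] exI[of _ p]) auto
  next
    case False
    then have "p - length s < length (concat (map snd cs))" using Cons.prems c by simp
    from Cons.IH[OF this] obtain xs s' ys k where
      h: "cs = xs @ (lab cs (p - length s), s') # ys" "k < length s'"
         "p - length s = length (concat (map snd xs)) + k" by blast
    show ?thesis
      using h False c by (intro exI[of _ "c # xs"] exI[of _ s'] exI[of _ ys] exI[of _ k]) auto
  qed
qed

lemma chunk_unique:
  assumes "cs = xs @ (l, s) # ys" "l \<notin> fst ` set xs" "l \<notin> fst ` set ys"
    and "cs = xs' @ (l, s') # ys'"
  shows "xs = xs' \<and> s = s'"
proof -
  have "map fst xs @ l # map fst ys = map fst xs' @ l # map fst ys'"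
    using assms(1,4) by (metis fst_conv list.simps(9) map_append)
  then have "map fst xs = map fst xs'"
    using assms(2,3) append_Cons_eq_iff[of l "map fst xs" "map fst ys"] by auto
  then have len: "length xs = length xs'" by (metis length_map)
  then have "xs = xs'" using assms(1,4) by (metis append_eq_append_conv)
  then show ?thesis using assms(1,4) by simp
qed

lemma lab_emb:
  "\<exists>f. strict_mono f \<and>
     (\<forall>i<length (concat (map snd (filter (P \<circ> fst) cs))).
        f i < length (concat (map snd cs)) \<and>
        concat (map snd cs) ! (f i) = concat (map snd (filter (P \<circ> fst) cs)) ! i) \<and>
     (\<forall>p<length (concat (map snd cs)). P (lab cs p) \<longrightarrow>
        p \<in> f ` {..<length (concat (map snd (filter (P \<circ> fst) cs)))})"
proof (induction cs)
  case Nil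
  show ?case by (intro exI[of _ id]) (simp add: strict_mono_def)
next
  case (Cons c cs)
  obtain l s where c: "c = (l, s)" by (cases c)
  from Cons.IH obtain f where f: "strict_mono f"
    "\<forall>i<length (concat (map snd (filter (P \<circ> fst) cs))).
        f i < length (concat (map snd cs)) \<and>
        concat (map snd cs) ! (f i) = concat (map snd (filter (P \<circ> fst) cs)) ! i"
    "\<forall>p<length (concat (map snd cs)). P (lab cs p) \<longrightarrow>
        p \<in> f ` {..<length (concat (map snd (filter (P \<circ> fst) cs)))}" by blast
  have fge: "i \<le> f i" for i using f(1) by (simp add: strict_mono_imp_increasing)
  show ?case
  proof (cases "P l")
    case True
    define g where "g = (\<lambda>i. if i < length s then i else length s + f (i - length s))"
    have "strict_mono g"
    proof (rule strict_monoI)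
      fix i j :: nat assume ij: "i < j"
      show "g i < g j"
      proof (cases "j < length s")
        case True then show ?thesis using ij by (simp add: g_def)
      next
        case False
        then show ?thesis using ij f(1) fge[of "j - length s"] fge[of "i - length s"]
          by (auto simp: g_def strict_mono_less)
      qed
    qed
    moreover have "\<forall>i<length (concat (map snd (filter (P \<circ> fst) (c # cs)))).
        g i < length (concat (map snd (c # cs))) \<and>
        concat (map snd (c # cs)) ! (g i) = concat (map snd (filter (P \<circ> fst) (c # cs))) ! i"
    proof (intro allI impI)
      fix i assume i: "i < length (concat (map snd (filter (P \<circ> fst) (c # cs))))"
      show "g i < length (concat (map snd (c # cs))) \<and>
        concat (map snd (c # cs)) ! (g i) = concat (map snd (filter (P \<circ> fst) (c # cs))) ! i"
      proof (cases "i < length s")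
        case True then show ?thesis using c \<open>P l\<close> by (simp add: g_def nth_append)
      next
        case False
        then have "i - length s < length (concat (map snd (filter (P \<circ> fst) cs)))"
          using i c \<open>P l\<close> by simp
        then show ?thesis using f(2) False c \<open>P l\<close> by (simp add: g_def nth_append)
      qed
    qed
    moreover have "\<forall>p<length (concat (map snd (c # cs))). P (lab (c # cs) p) \<longrightarrow>
        p \<in> g ` {..<length (concat (map snd (filter (P \<circ> fst) (c # cs))))}"
    proof (intro allI impI)
      fix p assume p: "p < length (concat (map snd (c # cs)))" "P (lab (c # cs) p)"
      show "p \<in> g ` {..<length (concat (map snd (filter (P \<circ> fst) (c # cs))))}"
      proof (cases "p < length s")
        case True
        then show ?thesis using c \<open>P l\<close> by (auto simp: g_def image_iff intro!: bexI[of _ p])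
      next
        case False
        then have "p - length s < length (concat (map snd cs))" "P (lab cs (p - length s))"
          using p c by auto
        then obtain i where i: "i < length (concat (map snd (filter (P \<circ> fst) cs)))" "p - length s = f i"
          using f(3) by blast
        have "g (length s + i) = p" using i False by (simp add: g_def)
        then show ?thesis using i c \<open>P l\<close> by (auto simp: image_iff intro!: bexI[of _ "length s + i"])
      qed
    qed
    ultimately show ?thesis by blast
  next
    case False
    define g where "g = (\<lambda>i. length s + f i)"
    have "strict_mono g" using f(1) by (simp add: g_def strict_mono_def)
    moreover have "\<forall>i<length (concat (map snd (filter (P \<circ> fst) (c # cs)))).
        g i < length (concat (map snd (c # cs))) \<and>
        concat (map snd (c # cs)) ! (g i) = concat (map snd (filter (P \<circ> fst) (c # cs))) ! i"
      using f(2) c False by (simp add: g_def nth_append)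
    moreover have "\<forall>p<length (concat (map snd (c # cs))). P (lab (c # cs) p) \<longrightarrow>
        p \<in> g ` {..<length (concat (map snd (filter (P \<circ> fst) (c # cs))))}"
    proof (intro allI impI)
      fix p assume p: "p < length (concat (map snd (c # cs)))" "P (lab (c # cs) p)"
      then have np: "\<not> p < length s" using c False by (auto split: if_splits)
      then have "p - length s < length (concat (map snd cs))" "P (lab cs (p - length s))"
        using p c by auto
      then obtain i where i: "i < length (concat (map snd (filter (P \<circ> fst) cs)))" "p - length s = f i"
        using f(3) by blast
      then show "p \<in> g ` {..<length (concat (map snd (filter (P \<circ> fst) (c # cs))))}"
        using np c False by (auto simp: g_def image_iff intro!: bexI[of _ i])
    qed
    ultimately show ?thesis by blast
  qed
qed

lemma lab_append1:
  "p < length (concat (map snd xs)) \<Longrightarrow> lab (xs @ ys) p = lab xs p"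
  by (induction xs arbitrary: p) auto

lemma lab_append2:
  "lab (xs @ ys) (length (concat (map snd xs)) + p) = lab ys p"
  by (induction xs arbitrary: p) auto

definition cnt :: "'a \<Rightarrow> 'a list \<Rightarrow> nat" where
  "cnt \<sigma> xs = length (filter (\<lambda>z. z = \<sigma>) xs)"

lemma cnt_simps[simp]:
  "cnt \<sigma> [] = 0"
  "cnt \<sigma> (z # xs) = (if z = \<sigma> then Suc (cnt \<sigma> xs) else cnt \<sigma> xs)"
  "cnt \<sigma> (xs @ ys) = cnt \<sigma> xs + cnt \<sigma> ys"
  "cnt \<sigma> (replicate n z) = (if z = \<sigma> then n else 0)"
  by (auto simp: cnt_def)

lemma cnt_concat_map: "cnt \<sigma> (concat (map f l)) = sum_list (map (\<lambda>i. cnt \<sigma> (f i)) l)"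
  by (induction l) auto

lemma cnt_concat_rep: "cnt \<sigma> (concat (replicate n xs)) = n * cnt \<sigma> xs"
  by (induction n) auto

lemma cnt_zero: "\<sigma> \<notin> set xs \<Longrightarrow> cnt \<sigma> xs = 0"
  by (auto simp: cnt_def filter_empty_conv)

lemma sum_list_const: "(\<And>i. i \<in> set l \<Longrightarrow> g i = k) \<Longrightarrow> sum_list (map g l) = length l * (k::nat)"
  by (induction l) auto

lemma cnt_card:
  assumes "m \<le> length T"
  shows "card {q. q < m \<and> T ! q = \<sigma>} = cnt \<sigma> (take m T)"
proof -
  have "cnt \<sigma> (take m T) = card {i. i < length (take m T) \<and> take m T ! i = \<sigma>}"
    unfolding cnt_def by (rule length_filter_conv_card)
  also have "{i. i < length (take m T) \<and> take m T ! i = \<sigma>} = {q. q < m \<and> T ! q = \<sigma>}"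
    using assms by auto
  finally show ?thesis by simp
qed

lemma card_split:
  fixes m1 m2 :: nat
  assumes "m1 \<le> m2" "\<not> P m1"
  shows "card {q. q < m2 \<and> P q} = card {q. q < m1 \<and> P q} + card {q. m1 < q \<and> q < m2 \<and> P q}"
proof -
  have "{q. q < m2 \<and> P q} = {q. q < m1 \<and> P q} \<union> {q. m1 < q \<and> q < m2 \<and> P q}"
  proof (rule set_eqI, rule iffI)
    fix q assume "q \<in> {q. q < m2 \<and> P q}"
    then have "q < m2" "P q" by auto
    then have "q \<noteq> m1" using assms(2) by auto
    then have "q < m1 \<or> m1 < q" by (simp add: nat_neq_iff)
    then show "q \<in> {q. q < m1 \<and> P q} \<union> {q. m1 < q \<and> q < m2 \<and> P q}"
      using \<open>q < m2\<close> \<open>P q\<close> by auto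
  next
    fix q assume "q \<in> {q. q < m1 \<and> P q} \<union> {q. m1 < q \<and> q < m2 \<and> P q}"
    then show "q \<in> {q. q < m2 \<and> P q}" using assms(1) by auto
  qed
  moreover have "{q. q < m1 \<and> P q} \<inter> {q. m1 < q \<and> q < m2 \<and> P q} = {}" by auto
  moreover have "finite {q. q < m1 \<and> P q}" "finite {q. m1 < q \<and> q < m2 \<and> P q}" by auto
  ultimately show ?thesis by (simp add: card_Un_disjoint)
qed

lemma nth_concat_rep_pair:
  "k < 2 * n \<Longrightarrow> concat (replicate n [a, b]) ! k = (if even k then a else b)"
proof (induction n arbitrary: k)
  case 0 then show ?case by simp
next
  case (Suc n)
  show ?case
  proof (cases "k < 2")
    case True then show ?thesis by (cases k) (auto simp: less_2_cases_iff)
  next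
    case False
    then have "concat (replicate (Suc n) [a, b]) ! k = concat (replicate n [a, b]) ! (k - 2)"
      by (simp add: nth_append numeral_2_eq_2)
    also have "\<dots> = (if even (k - 2) then a else b)" using Suc False by simp
    finally show ?thesis using False by auto
  qed
qed

declare upt_Suc[simp del]

datatype lbl = LY | LG | LX nat nat

lemma concat_map_snd_concat:
  "concat (map snd (concat (map f l))) = concat (map (\<lambda>i. concat (map snd (f i))) l)"
  by (induction l) auto

lemma len_rep_pair: "length (concat (replicate n [a, b])) = 2 * n"
  by (induction n) auto

context wsetup begin

definition "pre0 = replicate B s5 @ concat (replicate B [s6, bar s5])"
definition "post0 = replicate B (bar s6) @ concat (replicate B [s7, s6]) @ replicate B (bar s7)"
definition "QA a = concat (map (\<lambda>c. bar s6 # x a c) [1..<B+1]) @ replicate B s6"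
definition "MID = concat (map QA [1..<A+1])"
definition "chB a c = [(LG, [bar s6]), (LX a c, x a c)]"
definition "chA a = concat (map (chB a) [1..<B+1]) @ [(LG, replicate B s6)]"
definition "cs = [(LY, y1), (LG, pre0)] @ concat (map chA [1..<A+1]) @ [(LG, post0), (LY, y2)]"
definition "E1 a c = [(LY, y1), (LG, pre0)] @ concat (map chA [1..<a]) @ concat (map (chB a) [1..<c]) @ [(LG, [bar s6])]"
definition "E2 a c = concat (map (chB a) [c+1..<B+1]) @ [(LG, replicate B s6)] @ concat (map chA [a+1..<A+1]) @ [(LG, post0), (LY, y2)]"
definition "gad = {s5, bar s5, s6, bar s6, s7, bar s7}"

abbreviation "TT \<equiv> y1 @ GG @ y2"

lemma dist: "s5 \<noteq> bar s5" "s5 \<noteq> s6" "s5 \<noteq> bar s6" "s5 \<noteq> s7" "s5 \<noteq> bar s7"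
  "bar s5 \<noteq> s6" "bar s5 \<noteq> bar s6" "bar s5 \<noteq> s7" "bar s5 \<noteq> bar s7"
  "s6 \<noteq> bar s6" "s6 \<noteq> s7" "s6 \<noteq> bar s7" "bar s6 \<noteq> s7" "bar s6 \<noteq> bar s7" "s7 \<noteq> bar s7"
  using new_distinct by auto

lemma gad_notSigma: "z \<in> gad \<Longrightarrow> z \<notin> \<Sigma>"
  using new_fresh by (auto simp: gad_def)

lemma bar_gad: "z \<in> gad \<Longrightarrow> bar z \<in> gad"
  by (auto simp: gad_def bar_inv)

lemma GG_eq: "GG = pre0 @ MID @ post0"
  unfolding G_def pre0_def post0_def MID_def QA_def by (simp only: append_assoc)

lemma len_pre0: "length pre0 = 3 * B"
  by (simp add: pre0_def len_rep_pair)

lemma len_post0: "length post0 = 4 * B"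
  by (simp add: post0_def len_rep_pair)

lemma chA_snd: "concat (map snd (chA a)) = QA a"
  unfolding chA_def QA_def chB_def by (simp add: concat_map_snd_concat)

lemma cs_T: "concat (map snd cs) = TT"
  unfolding cs_def GG_eq MID_def by (simp add: concat_map_snd_concat chA_snd)

lemma E1_snd: "concat (map snd (E1 a c)) =
   y1 @ pre0 @ concat (map QA [1..<a]) @ concat (map (\<lambda>c'. bar s6 # x a c') [1..<c]) @ [bar s6]"
  unfolding E1_def chB_def by (simp add: concat_map_snd_concat chA_snd)

lemma cs_split:
  assumes "a \<in> {1..A}" "c \<in> {1..B}"
  shows "cs = E1 a c @ (LX a c, x a c) # E2 a c"
proof -
  have "chA a = concat (map (chB a) [1..<c]) @ [(LG, [bar s6]), (LX a c, x a c)] @ concat (map (chB a) [c+1..<B+1]) @ [(LG, replicate B s6)]"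
    unfolding chA_def using assms upt_split[of c B]
    by (simp del: upt_Suc add: chB_def)
  then show ?thesis
    unfolding cs_def E1_def E2_def using assms upt_split[of a A] by simp
qed

lemma chB_mem: "(l, s) \<in> set (chB a c) \<Longrightarrow> (l = LG \<and> s = [bar s6]) \<or> (l = LX a c \<and> s = x a c)"
  by (auto simp: chB_def)

lemma chA_mem: "(l, s) \<in> set (chA a) \<Longrightarrow>
   (l = LG \<and> (s = [bar s6] \<or> s = replicate B s6)) \<or> (\<exists>c \<in> set [1..<B+1]. l = LX a c \<and> s = x a c)"
proof -
  assume "(l, s) \<in> set (chA a)"
  then consider "(l, s) = (LG, replicate B s6)" | c where "c \<in> set [1..<B+1]" "(l, s) \<in> set (chB a c)"
    unfolding chA_def by auto
  then show ?thesis
  proof cases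
    case 1 then show ?thesis by simp
  next
    case 2 then show ?thesis using chB_mem[of l s a c] by blast
  qed
qed

lemma chA_lab: "(l, s) \<in> set (chA a) \<Longrightarrow> l = LG \<or> (\<exists>c. l = LX a c)"
  using chA_mem by blast

lemma labels_notin:
  assumes "a \<in> {1..A}" "c \<in> {1..B}"
  shows "LX a c \<notin> fst ` set (E1 a c)" "LX a c \<notin> fst ` set (E2 a c)"
proof -
  show "LX a c \<notin> fst ` set (E1 a c)"
  proof
    assume "LX a c \<in> fst ` set (E1 a c)"
    then obtain s where s: "(LX a c, s) \<in> set (E1 a c)" by force
    then consider a' where "a' \<in> set [1..<a]" "(LX a c, s) \<in> set (chA a')"
      | c' where "c' \<in> set [1..<c]" "(LX a c, s) \<in> set (chB a c')"
      unfolding E1_def by auto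
    then show False
    proof cases
      case 1 then show ?thesis using chA_lab[of "LX a c" s a'] by auto
    next
      case 2 then show ?thesis using chB_mem[of "LX a c" s a c'] by auto
    qed
  qed
  show "LX a c \<notin> fst ` set (E2 a c)"
  proof
    assume "LX a c \<in> fst ` set (E2 a c)"
    then obtain s where s: "(LX a c, s) \<in> set (E2 a c)" by force
    then consider a' where "a' \<in> set [a+1..<A+1]" "(LX a c, s) \<in> set (chA a')"
      | c' where "c' \<in> set [c+1..<B+1]" "(LX a c, s) \<in> set (chB a c')"
      unfolding E2_def by auto
    then show False
    proof cases
      case 1 then show ?thesis using chA_lab[of "LX a c" s a'] by auto
    next
      case 2 then show ?thesis using chB_mem[of "LX a c" s a c'] by auto
    qed
  qed
qed

lemma set_MID: "set MID \<subseteq> \<Sigma> \<union> {s6, bar s6}"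
proof
  fix z assume "z \<in> set MID"
  then obtain a c where "a \<in> set [1..<A+1]" "c \<in> set [1..<B+1]" "z = bar s6 \<or> z \<in> set (x a c) \<or> z = s6"
    unfolding MID_def QA_def by (auto split: if_splits)
  then show "z \<in> \<Sigma> \<union> {s6, bar s6}" using x_Sigma[of a c] by auto
qed

lemma cs_mem:
  assumes "(l, s) \<in> set cs"
  shows "(l = LG \<longrightarrow> set s \<subseteq> gad) \<and> (l = LY \<longrightarrow> set s \<subseteq> \<Sigma>) \<and>
         (\<forall>a c. l = LX a c \<longrightarrow> a \<in> {1..A} \<and> c \<in> {1..B} \<and> s = x a c \<and> set s \<subseteq> \<Sigma>)"
proof -
  consider "(l, s) = (LY, y1)" | "(l, s) = (LG, pre0)" | "(l, s) = (LG, post0)" | "(l, s) = (LY, y2)"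
    | a where "a \<in> set [1..<A+1]" "(l, s) \<in> set (chA a)"
    using assms unfolding cs_def by auto
  then show ?thesis
  proof cases
    case 5
    from chA_mem[OF 5(2)] show ?thesis
    proof
      assume "l = LG \<and> (s = [bar s6] \<or> s = replicate B s6)"
      then show ?thesis by (auto simp: gad_def)
    next
      assume "\<exists>c \<in> set [1..<B+1]. l = LX a c \<and> s = x a c"
      then obtain c where c: "c \<in> set [1..<B+1]" "l = LX a c" "s = x a c" by blast
      then show ?thesis using 5(1) x_Sigma[of a c] by auto
    qed
  qed (use y1_Sigma y2_Sigma in \<open>auto simp: gad_def pre0_def post0_def\<close>)
qed

end

declare upt_Suc[simp del]

context wsetup begin

lemma lab_X:
  assumes p: "p < length TT" and l: "lab cs p = LX a c"
  shows "a \<in> {1..A} \<and> c \<in> {1..B} \<and> (\<exists>k < length (x a c). p = length (concat (map snd (E1 a c))) + k)"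
proof -
  have pl: "p < length (concat (map snd cs))" using p cs_T by simp
  from lab_mem[OF pl] obtain s where "(lab cs p, s) \<in> set cs" by blast
  then have ac: "a \<in> {1..A}" "c \<in> {1..B}" using cs_mem l by auto
  from lab_pos[OF pl] obtain xs s ys k where h: "cs = xs @ (lab cs p, s) # ys" "k < length s"
    "p = length (concat (map snd xs)) + k" by blast
  have "E1 a c = xs \<and> x a c = s"
    using chunk_unique[OF cs_split[OF ac] labels_notin[OF ac]] h(1) l by metis
  then show ?thesis using ac h by auto
qed

lemma sym_lab:
  assumes p: "p < length TT"
  shows "(lab cs p = LG \<longrightarrow> TT ! p \<in> gad) \<and> (lab cs p \<noteq> LG \<longrightarrow> TT ! p \<in> \<Sigma>)"
proof -
  have pl: "p < length (concat (map snd cs))" using p cs_T by simp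
  from lab_mem[OF pl] obtain s where s: "(lab cs p, s) \<in> set cs" "TT ! p \<in> set s"
    using cs_T by auto
  show ?thesis
  proof (cases "lab cs p")
    case LY then show ?thesis using cs_mem[OF s(1)] s(2) by auto
  next
    case LG then show ?thesis using cs_mem[OF s(1)] s(2) by auto
  next
    case (LX a c) then show ?thesis using cs_mem[OF s(1)] s(2) by auto
  qed
qed

lemma sym_cases: "p < length TT \<Longrightarrow> TT ! p \<in> \<Sigma> \<or> TT ! p \<in> gad"
  using sym_lab by blast

lemma LY_out:
  assumes p: "p < length TT" and l: "lab cs p = LY"
  shows "p < length y1 \<or> length y1 + length GG \<le> p"
proof (rule ccontr)
  assume "\<not> ?thesis"
  then have pr: "length y1 \<le> p" "p < length y1 + length GG" by auto
  define csM where "csM = (LG, pre0) # concat (map chA [1..<A+1]) @ [(LG, post0)]"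
  have cse: "cs = (LY, y1) # csM @ [(LY, y2)]" by (simp add: cs_def csM_def)
  have gm: "concat (map snd csM) = GG"
    unfolding csM_def GG_eq MID_def by (simp add: concat_map_snd_concat chA_snd)
  have "lab cs p = lab (csM @ [(LY, y2)]) (p - length y1)" using pr cse by simp
  also have "\<dots> = lab csM (p - length y1)"
    using pr gm by (intro lab_append1) simp
  finally have e: "lab cs p = lab csM (p - length y1)" .
  have "p - length y1 < length (concat (map snd csM))" using pr gm by simp
  from lab_mem[OF this] obtain s where "(lab csM (p - length y1), s) \<in> set csM" by blast
  then have "(LY, s) \<in> set csM" using e l by simp
  then show False unfolding csM_def using chA_lab by fastforce
qed

abbreviation "oo \<equiv> length y1"
abbreviation "ee \<equiv> length y1 + 3 * B + length MID"

lemma len_TT: "length TT = ee + 4 * B + length y2"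
  by (simp add: GG_eq len_pre0 len_post0)

lemma TT_eq: "TT = y1 @ pre0 @ MID @ post0 @ y2"
  by (simp add: GG_eq)

lemma pre0_nth: "k < 3 * B \<Longrightarrow> pre0 ! k = (if k < B then s5 else if even (k - B) then s6 else bar s5)"
  by (simp add: pre0_def nth_append nth_concat_rep_pair)

lemma post0_nth: "k < 4 * B \<Longrightarrow> post0 ! k =
   (if k < B then bar s6 else if k < 3 * B then (if even (k - B) then s7 else s6) else bar s7)"
proof -
  assume k: "k < 4 * B"
  have l: "length (replicate B (bar s6)) = B" "length (concat (replicate B [s7, s6])) = 2 * B"
    by (simp_all add: len_rep_pair)
  show ?thesis
  proof (cases "k < B")
    case True then show ?thesis by (simp add: post0_def nth_append)
  next
    case False
    then have "post0 ! k = (concat (replicate B [s7, s6]) @ replicate B (bar s7)) ! (k - B)"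
      unfolding post0_def by (simp add: nth_append)
    moreover have "(concat (replicate B [s7, s6]) @ replicate B (bar s7)) ! (k - B) =
        (if k - B < 2 * B then concat (replicate B [s7, s6]) ! (k - B) else replicate B (bar s7) ! (k - B - 2 * B))"
      by (simp add: nth_append len_rep_pair)
    ultimately show ?thesis using False k by (auto simp: nth_concat_rep_pair)
  qed
qed

lemma TT_pre: "k < 3 * B \<Longrightarrow> TT ! (oo + k) = pre0 ! k"
  by (simp add: TT_eq nth_append len_pre0)

lemma TT_post: "k < 4 * B \<Longrightarrow> TT ! (ee + k) = post0 ! k"
proof -
  assume k: "k < 4 * B"
  have "TT = (y1 @ pre0 @ MID) @ post0 @ y2" by (simp add: TT_eq)
  moreover have "length (y1 @ pre0 @ MID) = ee" by (simp add: len_pre0)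
  ultimately show ?thesis using k by (simp add: nth_append len_post0)
qed

lemma TT_mid: "oo + 3 * B \<le> p \<Longrightarrow> p < ee \<Longrightarrow> TT ! p \<in> \<Sigma> \<union> {s6, bar s6}"
proof -
  assume p: "oo + 3 * B \<le> p" "p < ee"
  obtain k where k: "p = length (y1 @ pre0) + k" using p len_pre0 by (metis le_add_diff_inverse length_append)
  have "TT = (y1 @ pre0) @ MID @ post0 @ y2" by (simp add: TT_eq)
  then have "TT ! p = (MID @ post0 @ y2) ! k" using k by (simp only: nth_append_length_plus)
  moreover have "k < length MID" using k p len_pre0 by simp
  ultimately have "TT ! p = MID ! (p - (oo + 3 * B))" using k len_pre0 by (simp add: nth_append)
  moreover have "p - (oo + 3 * B) < length MID" using p by simp
  ultimately show ?thesis using set_MID nth_mem by fastforce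
qed

lemma TT_y1: "p < oo \<Longrightarrow> TT ! p \<in> \<Sigma>"
  using y1_Sigma by (simp add: nth_append subset_iff)

lemma TT_y2: "ee + 4 * B \<le> p \<Longrightarrow> p < length TT \<Longrightarrow> TT ! p \<in> \<Sigma>"
proof -
  assume p: "ee + 4 * B \<le> p" "p < length TT"
  have "TT = (y1 @ pre0 @ MID @ post0) @ y2" by (simp add: TT_eq)
  moreover have "length (y1 @ pre0 @ MID @ post0) = ee + 4 * B" by (simp add: len_pre0 len_post0)
  ultimately have "TT ! p = y2 ! (p - (ee + 4 * B))" using p
    by (metis le_add_diff_inverse nth_append_length_plus)
  moreover have "p - (ee + 4 * B) < length y2" using p len_TT by simp
  ultimately show ?thesis using y2_Sigma nth_mem by fastforce
qed

end

declare upt_Suc[simp del]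

lemma zone_bound:
  assumes v: "valid_structure bar T R" and inv: "\<And>z. bar (bar z) = z" and ne: "s \<noteq> bar s"
    and R6: "R6 \<subseteq> R" "\<forall>(i, j)\<in>R6. (T ! i = s \<or> T ! i = bar s) \<and> i \<in> Z \<and> j \<in> Z"
    and Z: "finite Z"
    and K: "K \<subseteq> Z" "\<forall>k\<in>K. T ! k = s \<and> (\<forall>(a, b)\<in>R. a \<noteq> k \<and> b \<noteq> k)"
  shows "card R6 \<le> card {q\<in>Z. T ! q = bar s} \<and> card R6 + card K \<le> card {q\<in>Z. T ! q = s}"
proof -
  define g where "g = (\<lambda>(i::nat, j::nat). if T ! i = s then i else j)"
  define h where "h = (\<lambda>(i::nat, j::nat). if T ! i = s then j else i)"
  have sym: "T ! j = bar (T ! i)" if "(i, j) \<in> R" for i j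
    using v that by (auto simp: valid_structure_def)
  have share: "p = q" if "p \<in> R" "q \<in> R" "fst p = fst q \<or> fst p = snd q \<or> snd p = fst q \<or> snd p = snd q" for p q
  proof (rule ccontr)
    assume "p \<noteq> q"
    then have "\<not> crossing p q" using v that(1,2) by (auto simp: valid_structure_def)
    then show False using that(3) by (cases p, cases q) (auto simp: crossing_def)
  qed
  have gs: "T ! (g p) = s \<and> g p \<in> Z" if "p \<in> R6" for p
  proof -
    obtain i j where p: "p = (i, j)" by (cases p)
    have "T ! j = bar (T ! i)" using sym R6(1) that p by auto
    then show ?thesis using R6(2) that p inv by (auto simp: g_def)
  qed
  have hs: "T ! (h p) = bar s \<and> h p \<in> Z" if "p \<in> R6" for p
  proof -
    obtain i j where p: "p = (i, j)" by (cases p)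
    have "T ! j = bar (T ! i)" using sym R6(1) that p by auto
    then show ?thesis using R6(2) that p inv by (auto simp: h_def)
  qed
  have ig: "inj_on g R6"
  proof (rule inj_onI)
    fix p q assume pq: "p \<in> R6" "q \<in> R6" "g p = g q"
    have m: "g r = fst r \<or> g r = snd r" for r by (cases r) (simp add: g_def)
    have "fst p = fst q \<or> fst p = snd q \<or> snd p = fst q \<or> snd p = snd q"
      using m[of p] m[of q] pq(3) by metis
    then show "p = q" using share[of p q] R6(1) pq(1,2) by blast
  qed
  have ih: "inj_on h R6"
  proof (rule inj_onI)
    fix p q assume pq: "p \<in> R6" "q \<in> R6" "h p = h q"
    have m: "h r = fst r \<or> h r = snd r" for r by (cases r) (simp add: h_def)
    have "fst p = fst q \<or> fst p = snd q \<or> snd p = fst q \<or> snd p = snd q"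
      using m[of p] m[of q] pq(3) by metis
    then show "p = q" using share[of p q] R6(1) pq(1,2) by blast
  qed
  have fin: "finite {q\<in>Z. T ! q = bar s}" "finite {q\<in>Z. T ! q = s}" using Z by auto
  have "card R6 = card (h ` R6)" using ih by (simp add: card_image)
  also have "\<dots> \<le> card {q\<in>Z. T ! q = bar s}" using hs fin by (intro card_mono) auto
  finally have c1: "card R6 \<le> card {q\<in>Z. T ! q = bar s}" .
  have dj: "g ` R6 \<inter> K = {}"
  proof (rule ccontr)
    assume "g ` R6 \<inter> K \<noteq> {}"
    then obtain p where p: "p \<in> R6" "g p \<in> K" by blast
    obtain i j where ij: "p = (i, j)" by (cases p)
    have "g p = i \<or> g p = j" by (auto simp: g_def ij)
    have "(i, j) \<in> R" using p(1) R6(1) ij by auto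
    moreover have "\<forall>(a, b)\<in>R. a \<noteq> g p \<and> b \<noteq> g p" using K(2) p(2) by blast
    ultimately show False using \<open>g p = i \<or> g p = j\<close> by auto
  qed
  have fK: "finite K" using K(1) Z finite_subset by blast
  have fg: "finite (g ` R6)" by (rule finite_subset[OF _ fin(2)]) (use gs in auto)
  have "card R6 + card K = card (g ` R6) + card K" using ig by (simp add: card_image)
  also have "\<dots> = card (g ` R6 \<union> K)"
    using dj fK fg by (simp add: card_Un_disjoint)
  also have "\<dots> \<le> card {q\<in>Z. T ! q = s}" using gs K fin by (intro card_mono) auto
  finally show ?thesis using c1 by simp
qed

lemma valid_subset: "valid_structure bar T R \<Longrightarrow> S \<subseteq> R \<Longrightarrow> valid_structure bar T S"
  unfolding valid_structure_def by blast

context wsetup begin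

lemma region:
  assumes p: "p < length TT"
  shows "(p < oo \<and> TT ! p \<in> \<Sigma>) \<or> (oo \<le> p \<and> p < oo + B \<and> TT ! p = s5)
    \<or> (\<exists>k<B. p = oo + B + 2 * k \<and> TT ! p = s6) \<or> (\<exists>k<B. p = oo + B + 2 * k + 1 \<and> TT ! p = bar s5)
    \<or> (oo + 3 * B \<le> p \<and> p < ee \<and> TT ! p \<in> \<Sigma> \<union> {s6, bar s6})
    \<or> (ee \<le> p \<and> p < ee + B \<and> TT ! p = bar s6)
    \<or> (\<exists>k<B. p = ee + B + 2 * k \<and> TT ! p = s7) \<or> (\<exists>k<B. p = ee + B + 2 * k + 1 \<and> TT ! p = s6)
    \<or> (ee + 3 * B \<le> p \<and> p < ee + 4 * B \<and> TT ! p = bar s7) \<or> (ee + 4 * B \<le> p \<and> TT ! p \<in> \<Sigma>)"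
proof -
  consider "p < oo" | "oo \<le> p" "p < oo + 3 * B" | "oo + 3 * B \<le> p" "p < ee"
    | "ee \<le> p" "p < ee + 4 * B" | "ee + 4 * B \<le> p" by linarith
  then show ?thesis
  proof cases
    case 1 then show ?thesis using TT_y1 by blast
  next
    case 2
    define k where "k = p - oo"
    have k: "k < 3 * B" "p = oo + k" using 2 by (auto simp: k_def)
    have t: "TT ! p = (if k < B then s5 else if even (k - B) then s6 else bar s5)"
      using TT_pre[OF k(1)] pre0_nth[OF k(1)] k(2) by simp
    show ?thesis
    proof (cases "k < B")
      case True then show ?thesis using t k by auto
    next
      case False
      show ?thesis
      proof (cases "even (k - B)")
        case True
        then obtain m where m: "k - B = 2 * m" using True by (blast elim: evenE)
        then have "m < B" "p = oo + B + 2 * m" using k False by auto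
        then show ?thesis using t False True by auto
      next
        case odd: False
        then obtain m where m: "k - B = 2 * m + 1" using odd by (blast elim: oddE)
        then have "m < B" "p = oo + B + 2 * m + 1" using k False by auto
        then show ?thesis using t False odd by auto
      qed
    qed
  next
    case 3 then show ?thesis using TT_mid by blast
  next
    case 4
    define k where "k = p - ee"
    have k: "k < 4 * B" "p = ee + k" using 4 by (auto simp: k_def)
    have t: "TT ! p = (if k < B then bar s6 else if k < 3 * B then (if even (k - B) then s7 else s6) else bar s7)"
      using TT_post[OF k(1)] post0_nth[OF k(1)] k(2) by simp
    show ?thesis
    proof (cases "k < B")
      case True then show ?thesis using t k by auto
    next
      case False
      show ?thesis
      proof (cases "k < 3 * B")
        case k3: True
        show ?thesis
        proof (cases "even (k - B)")
          case True
          then obtain m where m: "k - B = 2 * m" using True by (blast elim: evenE)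
          then have "m < B" "p = ee + B + 2 * m" using k False k3 by auto
          then show ?thesis using t False k3 True by auto
        next
          case odd: False
          then obtain m where m: "k - B = 2 * m + 1" using odd by (blast elim: oddE)
          then have "m < B" "p = ee + B + 2 * m + 1" using k False k3 by auto
          then show ?thesis using t False k3 odd by auto
        qed
      next
        case False then show ?thesis using t k by auto
      qed
    qed
  next
    case 5 then show ?thesis using TT_y2 p by blast
  qed
qed

lemma F_s5: "p < length TT \<Longrightarrow> TT ! p = s5 \<Longrightarrow> oo \<le> p \<and> p < oo + B"
  using region[of p] dist new_fresh by auto

lemma F_b5: "p < length TT \<Longrightarrow> TT ! p = bar s5 \<Longrightarrow> \<exists>k<B. p = oo + B + 2 * k + 1"
  using region[of p] dist new_fresh by auto

lemma F_s7: "p < length TT \<Longrightarrow> TT ! p = s7 \<Longrightarrow> \<exists>k<B. p = ee + B + 2 * k"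
  using region[of p] dist new_fresh by auto

lemma F_b7: "p < length TT \<Longrightarrow> TT ! p = bar s7 \<Longrightarrow> ee + 3 * B \<le> p \<and> p < ee + 4 * B"
  using region[of p] dist new_fresh by auto

lemma F_nob6: "p < length TT \<Longrightarrow> TT ! p = bar s6 \<Longrightarrow>
    \<not> (oo \<le> p \<and> p < oo + 3 * B) \<and> \<not> (ee + B \<le> p \<and> p < ee + 4 * B)"
  using region[of p] dist new_fresh by auto

lemma F_Sig: "p < length TT \<Longrightarrow> TT ! p \<in> \<Sigma> \<Longrightarrow> p < oo \<or> (oo + 3 * B \<le> p \<and> p < ee) \<or> ee + 4 * B \<le> p"
  using region[of p] new_fresh by auto

lemma F_gad: "p < length TT \<Longrightarrow> TT ! p \<in> gad \<Longrightarrow> oo \<le> p \<and> p < ee + 4 * B"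
  using region[of p] gad_notSigma by auto

lemma F_six1: "k < B \<Longrightarrow> TT ! (oo + B + 2 * k) = s6"
proof -
  assume k: "k < B"
  then have "B + 2 * k < 3 * B" by simp
  from TT_pre[OF this] pre0_nth[OF this] show ?thesis by (simp add: add.assoc)
qed

lemma F_six2: "k < B \<Longrightarrow> TT ! (ee + B + 2 * k + 1) = s6"
proof -
  assume k: "k < B"
  then have "B + 2 * k + 1 < 4 * B" by simp
  from TT_post[OF this] post0_nth[OF this] k show ?thesis by (simp add: add.assoc)
qed

end

declare upt_Suc[simp del]

context wsetup begin

lemma vfacts:
  assumes v: "valid_structure bar TT R" and ij: "(i, j) \<in> R"
  shows "i < j" "j < length TT" "TT ! j = bar (TT ! i)"
  using v ij by (auto simp: valid_structure_def)

lemma vcross: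
  assumes v: "valid_structure bar TT R" and "p \<in> R" "q \<in> R" "p \<noteq> q"
  shows "\<not> crossing p q"
  using assms by (auto simp: valid_structure_def)

lemma bar_eq: "bar a = b \<longleftrightarrow> a = bar b"
  using bar_inv by metis

lemma kill5:
  assumes v: "valid_structure bar TT R" and ij: "(i, j) \<in> R" and s: "TT ! i = s5 \<or> TT ! i = bar s5"
  shows "TT ! (j - 1) = s6 \<and> oo + B \<le> j - 1 \<and> j - 1 < oo + 3 * B \<and> 0 < j \<and>
         (\<forall>(a, b)\<in>R. a \<noteq> j - 1 \<and> b \<noteq> j - 1)"
proof -
  note f = vfacts[OF v ij]
  have il: "i < length TT" using f by simp
  have "TT ! i = s5"
  proof (rule ccontr)
    assume "TT ! i \<noteq> s5"
    then have "TT ! i = bar s5" "TT ! j = s5" using s f(3) bar_inv by auto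
    then show False using F_b5[OF il] F_s5[OF f(2)] f(1) by auto
  qed
  then have tj: "TT ! j = bar s5" using f(3) by simp
  have ii: "oo \<le> i" "i < oo + B" using F_s5[OF il \<open>TT ! i = s5\<close>] by auto
  obtain k where k: "k < B" "j = oo + B + 2 * k + 1" using F_b5[OF f(2) tj] by blast
  have j1: "j - 1 = oo + B + 2 * k" using k by simp
  have t6: "TT ! (j - 1) = s6" using F_six1[OF k(1)] j1 by simp
  have unp: "\<forall>(a, b)\<in>R. a \<noteq> j - 1 \<and> b \<noteq> j - 1"
  proof (rule ccontr)
    assume "\<not> ?thesis"
    then obtain a b where ab: "(a, b) \<in> R" "a = j - 1 \<or> b = j - 1" by blast
    note g = vfacts[OF v ab(1)]
    have ne: "(a, b) \<noteq> (i, j)" using ab(2) t6 \<open>TT ! i = s5\<close> dist k by auto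
    have nc1: "\<not> crossing (a, b) (i, j)" using vcross[OF v ab(1) ij ne] .
    have nc2: "\<not> crossing (i, j) (a, b)" using vcross[OF v ij ab(1)] ne by auto
    from ab(2) show False
    proof
      assume a: "a = j - 1"
      then have "TT ! b = bar s6" using g t6 by simp
      have "b \<noteq> j" using nc2 a by (auto simp: crossing_def)
      then have "j < b" using g a k by auto
      then show False using nc2 a ii k by (auto simp: crossing_def)
    next
      assume b: "b = j - 1"
      then have "TT ! a = bar s6" using g t6 bar_eq by metis
      have "a \<noteq> i" using nc1 b by (auto simp: crossing_def)
      moreover have "\<not> (i < a)"
      proof
        assume "i < a"
        then have "oo \<le> a \<and> a < oo + 3 * B" using ii g b k by auto
        then show False using F_nob6[of a] \<open>TT ! a = bar s6\<close> g by auto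
      qed
      ultimately have "a < i" by auto
      then show False using nc1 b ii k by (auto simp: crossing_def)
    qed
  qed
  show ?thesis using t6 j1 unp k by auto
qed

lemma kill7:
  assumes v: "valid_structure bar TT R" and ij: "(i, j) \<in> R" and s: "TT ! i = s7 \<or> TT ! i = bar s7"
  shows "TT ! (i + 1) = s6 \<and> ee + B < i + 1 \<and> i + 1 < ee + 4 * B \<and>
         (\<forall>(a, b)\<in>R. a \<noteq> i + 1 \<and> b \<noteq> i + 1)"
proof -
  note f = vfacts[OF v ij]
  have il: "i < length TT" using f by simp
  have "TT ! i = s7"
  proof (rule ccontr)
    assume "TT ! i \<noteq> s7"
    then have "TT ! i = bar s7" "TT ! j = s7" using s f(3) bar_inv by auto
    then show False using F_b7[OF il] F_s7[OF f(2)] f(1) by auto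
  qed
  then have tj: "TT ! j = bar s7" using f(3) by simp
  have jj: "ee + 3 * B \<le> j" "j < ee + 4 * B" using F_b7[OF f(2) tj] by auto
  obtain k where k: "k < B" "i = ee + B + 2 * k" using F_s7[OF il \<open>TT ! i = s7\<close>] by blast
  have t6: "TT ! (i + 1) = s6" using F_six2[OF k(1)] k by simp
  have unp: "\<forall>(a, b)\<in>R. a \<noteq> i + 1 \<and> b \<noteq> i + 1"
  proof (rule ccontr)
    assume "\<not> ?thesis"
    then obtain a b where ab: "(a, b) \<in> R" "a = i + 1 \<or> b = i + 1" by blast
    note g = vfacts[OF v ab(1)]
    have ne: "(a, b) \<noteq> (i, j)" using ab(2) t6 \<open>TT ! i = s7\<close> tj dist g by auto
    have nc1: "\<not> crossing (a, b) (i, j)" using vcross[OF v ab(1) ij ne] .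
    have nc2: "\<not> crossing (i, j) (a, b)" using vcross[OF v ij ab(1)] ne by auto
    from ab(2) show False
    proof
      assume a: "a = i + 1"
      then have "TT ! b = bar s6" using g t6 by simp
      have "b \<noteq> j" using nc2 a by (auto simp: crossing_def)
      moreover have "\<not> b < j"
      proof
        assume "b < j"
        then have "ee + B \<le> b \<and> b < ee + 4 * B" using g a k jj by auto
        then show False using F_nob6[of b] \<open>TT ! b = bar s6\<close> g by auto
      qed
      ultimately have "j < b" by auto
      then show False using nc2 a jj k f by (auto simp: crossing_def)
    next
      assume b: "b = i + 1"
      then have "TT ! a = bar s6" using g t6 bar_eq by metis
      have "a \<noteq> i" using nc1 b by (auto simp: crossing_def)
      then have "a < i" using g b by auto
      then show False using nc1 b f jj k by (auto simp: crossing_def)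
    qed
  qed
  show ?thesis using t6 unp k jj by auto
qed

end

declare upt_Suc[simp del]

context wsetup begin

lemma cnt_Sig: "set xs \<subseteq> \<Sigma> \<Longrightarrow> z \<notin> \<Sigma> \<Longrightarrow> cnt z xs = 0"
  by (rule cnt_zero) auto

lemma cnt_row:
  assumes a: "a \<in> {1..A}" and l: "set l \<subseteq> {1..B}"
  shows "cnt s6 (concat (map (\<lambda>c. bar s6 # x a c) l)) = 0 \<and>
         cnt (bar s6) (concat (map (\<lambda>c. bar s6 # x a c) l)) = length l"
proof -
  have "cnt s6 (bar s6 # x a c) = 0 \<and> cnt (bar s6) (bar s6 # x a c) = 1" if "c \<in> set l" for c
  proof -
    have "c \<in> {1..B}" using l that by auto
    then have "set (x a c) \<subseteq> \<Sigma>" using x_Sigma[OF a] by blast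
    then show ?thesis using cnt_Sig[of "x a c"] new_fresh dist by auto
  qed
  then show ?thesis unfolding cnt_concat_map
    using sum_list_const[of l "\<lambda>c. cnt s6 (bar s6 # x a c)" 0]
          sum_list_const[of l "\<lambda>c. cnt (bar s6) (bar s6 # x a c)" 1] by auto
qed

lemma cnt_QA:
  assumes a: "a \<in> {1..A}"
  shows "cnt s6 (QA a) = B \<and> cnt (bar s6) (QA a) = B"
proof -
  have "set [1..<B+1] \<subseteq> {1..B}" by auto
  from cnt_row[OF a this] show ?thesis using dist unfolding QA_def by simp
qed

lemma cnt_QAs:
  assumes "a \<le> A + 1"
  shows "cnt s6 (concat (map QA [1..<a])) = (a - 1) * B \<and> cnt (bar s6) (concat (map QA [1..<a])) = (a - 1) * B"
proof -
  have "\<And>i. i \<in> set [1..<a] \<Longrightarrow> cnt s6 (QA i) = B" "\<And>i. i \<in> set [1..<a] \<Longrightarrow> cnt (bar s6) (QA i) = B"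
    using cnt_QA assms by auto
  then show ?thesis unfolding cnt_concat_map
    using sum_list_const[of "[1..<a]" "\<lambda>i. cnt s6 (QA i)" B]
          sum_list_const[of "[1..<a]" "\<lambda>i. cnt (bar s6) (QA i)" B] by auto
qed

lemma cnt_pre0: "cnt s6 pre0 = B \<and> cnt (bar s6) pre0 = 0"
  using dist by (simp add: pre0_def cnt_concat_rep)

lemma cnt_post0: "cnt s6 post0 = B \<and> cnt (bar s6) post0 = B"
  using dist by (simp add: post0_def cnt_concat_rep)

lemma cnt_y: "cnt s6 y1 = 0" "cnt (bar s6) y1 = 0" "cnt s6 y2 = 0" "cnt (bar s6) y2 = 0"
  using cnt_Sig y1_Sigma y2_Sigma new_fresh by auto

lemma cnt_E1:
  assumes a: "a \<in> {1..A}" and c: "c \<in> {1..B}"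
  shows "cnt s6 (concat (map snd (E1 a c))) = a * B \<and>
         cnt (bar s6) (concat (map snd (E1 a c))) + B = a * B + c"
proof -
  have r: "cnt s6 (concat (map (\<lambda>c'. bar s6 # x a c') [1..<c])) = 0 \<and>
         cnt (bar s6) (concat (map (\<lambda>c'. bar s6 # x a c') [1..<c])) = c - 1"
  proof -
    have "set [1..<c] \<subseteq> {1..B}" using c by auto
    from cnt_row[OF a this] show ?thesis by simp
  qed
  have q: "cnt s6 (concat (map QA [1..<a])) = (a - 1) * B \<and> cnt (bar s6) (concat (map QA [1..<a])) = (a - 1) * B"
    using cnt_QAs[of a] a by auto
  obtain a' where a': "a = Suc a'" using a by (cases a) auto
  obtain c' where c': "c = Suc c'" using c by (cases c) auto
  show ?thesis unfolding E1_snd using r q cnt_pre0 cnt_y dist a' c' by simp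
qed

lemma cnt_TT: "cnt s6 TT = A * B + 2 * B \<and> cnt (bar s6) TT = A * B + B"
proof -
  have m: "cnt s6 MID = A * B \<and> cnt (bar s6) MID = A * B"
    using cnt_QAs[of "A + 1"] unfolding MID_def by simp
  show ?thesis unfolding TT_eq using m cnt_pre0 cnt_post0 cnt_y by simp
qed

lemma LX_pos:
  assumes p: "p < length TT" and l: "lab cs p = LX a c"
  shows "oo + 3 * B \<le> p \<and> p < ee \<and> a \<in> {1..A} \<and> c \<in> {1..B} \<and>
    (\<exists>k < length (x a c). p = length (concat (map snd (E1 a c))) + k)"
proof -
  obtain k where ac: "a \<in> {1..A}" "c \<in> {1..B}" and k: "k < length (x a c)"
    "p = length (concat (map snd (E1 a c))) + k" using lab_X[OF p l] by blast
  have "length (concat (map snd (E1 a c))) \<ge> oo + 3 * B" unfolding E1_snd by (simp add: len_pre0)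
  moreover have "length TT = length (concat (map snd (E1 a c))) + length (x a c) + length (concat (map snd (E2 a c)))"
    using cs_split[OF ac] cs_T by (metis concat_append length_append list.simps(9) map_append snd_conv concat.simps(2) add.assoc)
  moreover have "length (concat (map snd (E2 a c))) \<ge> 4 * B + length y2"
    unfolding E2_def by (simp add: len_post0)
  ultimately show ?thesis using k ac len_TT by auto
qed

lemma pref_cnt:
  assumes p: "p < length TT" and l: "lab cs p = LX a c" and z: "z \<notin> \<Sigma>"
  shows "card {q. q < p \<and> TT ! q = z} = cnt z (concat (map snd (E1 a c)))"
proof -
  obtain k where ac: "a \<in> {1..A}" "c \<in> {1..B}" and k: "k < length (x a c)"
    "p = length (concat (map snd (E1 a c))) + k" using LX_pos[OF p l] by blast
  have "TT = concat (map snd (E1 a c)) @ x a c @ concat (map snd (E2 a c))"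
    using cs_split[OF ac] cs_T by simp
  then have "take p TT = concat (map snd (E1 a c)) @ take k (x a c)" using k by simp
  moreover have "cnt z (take k (x a c)) = 0"
    using x_Sigma[OF ac] z by (intro cnt_Sig) (auto dest: in_set_takeD)
  ultimately show ?thesis using cnt_card[of p TT z] p by simp
qed

lemma share:
  assumes v: "valid_structure bar TT R" and "p \<in> R" "q \<in> R"
    and "fst p = fst q \<or> fst p = snd q \<or> snd p = fst q \<or> snd p = snd q"
  shows "p = q"
proof (rule ccontr)
  assume "p \<noteq> q"
  then have "\<not> crossing p q" using vcross[OF v assms(2,3)] by simp
  then show False using assms(4) by (cases p, cases q) (auto simp: crossing_def)
qed

definition "R5 R = {p \<in> R. TT ! fst p = s5 \<or> TT ! fst p = bar s5}"
definition "R6 R = {p \<in> R. TT ! fst p = s6 \<or> TT ! fst p = bar s6}"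
definition "R7 R = {p \<in> R. TT ! fst p = s7 \<or> TT ! fst p = bar s7}"

lemma K5:
  assumes v: "valid_structure bar TT R"
  shows "card ((\<lambda>p. snd p - 1) ` R5 R) = card (R5 R) \<and>
    (\<forall>k\<in>(\<lambda>p. snd p - 1) ` R5 R. TT ! k = s6 \<and> oo + B \<le> k \<and> k < oo + 3 * B \<and> (\<forall>(a, b)\<in>R. a \<noteq> k \<and> b \<noteq> k))"
proof
  have inj: "inj_on (\<lambda>p. snd p - 1) (R5 R)"
  proof (rule inj_onI)
    fix p q assume pq: "p \<in> R5 R" "q \<in> R5 R" "snd p - 1 = snd q - 1"
    obtain i j i' j' where ij: "p = (i, j)" "q = (i', j')" by (cases p, cases q)
    have "0 < j" "0 < j'" using kill5[OF v] pq ij by (auto simp: R5_def)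
    then have "snd p = snd q" using pq(3) ij by simp
    then show "p = q" using share[OF v, of p q] pq by (auto simp: R5_def)
  qed
  then show "card ((\<lambda>p. snd p - 1) ` R5 R) = card (R5 R)" by (rule card_image)
  show "\<forall>k\<in>(\<lambda>p. snd p - 1) ` R5 R. TT ! k = s6 \<and> oo + B \<le> k \<and> k < oo + 3 * B \<and> (\<forall>(a, b)\<in>R. a \<noteq> k \<and> b \<noteq> k)"
  proof
    fix k assume "k \<in> (\<lambda>p. snd p - 1) ` R5 R"
    then obtain i j where ij: "(i, j) \<in> R" "TT ! i = s5 \<or> TT ! i = bar s5" "k = j - 1"
      by (auto simp: R5_def)
    from kill5[OF v ij(1,2)] ij(3)
    show "TT ! k = s6 \<and> oo + B \<le> k \<and> k < oo + 3 * B \<and> (\<forall>(a, b)\<in>R. a \<noteq> k \<and> b \<noteq> k)" by simp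
  qed
qed

lemma K7:
  assumes v: "valid_structure bar TT R"
  shows "card ((\<lambda>p. fst p + 1) ` R7 R) = card (R7 R) \<and>
    (\<forall>k\<in>(\<lambda>p. fst p + 1) ` R7 R. TT ! k = s6 \<and> ee + B < k \<and> k < ee + 4 * B \<and> (\<forall>(a, b)\<in>R. a \<noteq> k \<and> b \<noteq> k))"
proof
  have inj: "inj_on (\<lambda>p. fst p + 1) (R7 R)"
  proof (rule inj_onI)
    fix p q assume pq: "p \<in> R7 R" "q \<in> R7 R" "fst p + 1 = fst q + 1"
    then show "p = q" using share[OF v, of p q] by (auto simp: R7_def)
  qed
  then show "card ((\<lambda>p. fst p + 1) ` R7 R) = card (R7 R)" by (rule card_image)
  show "\<forall>k\<in>(\<lambda>p. fst p + 1) ` R7 R. TT ! k = s6 \<and> ee + B < k \<and> k < ee + 4 * B \<and> (\<forall>(a, b)\<in>R. a \<noteq> k \<and> b \<noteq> k)"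
  proof
    fix k assume "k \<in> (\<lambda>p. fst p + 1) ` R7 R"
    then obtain i j where ij: "(i, j) \<in> R" "TT ! i = s7 \<or> TT ! i = bar s7" "k = i + 1"
      by (auto simp: R7_def)
    from kill7[OF v ij(1,2)] ij(3)
    show "TT ! k = s6 \<and> ee + B < k \<and> k < ee + 4 * B \<and> (\<forall>(a, b)\<in>R. a \<noteq> k \<and> b \<noteq> k)" by simp
  qed
qed

lemma R6_props:
  assumes v: "valid_structure bar TT R"
  shows "\<forall>(i, j)\<in>R6 R. (TT ! i = s6 \<or> TT ! i = bar s6) \<and> i < j \<and> j < length TT"
  using v by (auto simp: R6_def valid_structure_def)

lemma tot_card: "card {q. q < length TT \<and> TT ! q = z} = cnt z TT"
  using cnt_card[of "length TT" TT z] by simp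

lemma gadget_nocut:
  assumes v: "valid_structure bar TT R"
  shows "card (R5 R) + card (R7 R) + 2 * card (R6 R) \<le> 2 * A * B + 3 * B"
proof -
  define K where "K = (\<lambda>p. snd p - 1) ` R5 R \<union> (\<lambda>p. fst p + 1) ` R7 R"
  have dj: "(\<lambda>p. snd p - 1) ` R5 R \<inter> (\<lambda>p. fst p + 1) ` R7 R = {}"
    using K5[OF v] K7[OF v] by fastforce
  have fin: "finite ((\<lambda>p. snd p - 1) ` R5 R)" "finite ((\<lambda>p. fst p + 1) ` R7 R)"
    using valid_finite[OF v] by (auto simp: R5_def R7_def)
  have cK: "card K = card (R5 R) + card (R7 R)"
    unfolding K_def using card_Un_disjoint[OF fin dj] K5[OF v] K7[OF v] by simp
  have zb: "card (R6 R) \<le> card {q\<in>{..<length TT}. TT ! q = bar s6} \<and>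
      card (R6 R) + card K \<le> card {q\<in>{..<length TT}. TT ! q = s6}"
  proof (rule zone_bound[OF v bar_inv dist(10)])
    show "R6 R \<subseteq> R" by (auto simp: R6_def)
    show "\<forall>(i, j)\<in>R6 R. (TT ! i = s6 \<or> TT ! i = bar s6) \<and> i \<in> {..<length TT} \<and> j \<in> {..<length TT}"
      using R6_props[OF v] by auto
    show "finite {..<length TT}" by simp
    show "K \<subseteq> {..<length TT}" using K5[OF v] K7[OF v] len_TT unfolding K_def by fastforce
    show "\<forall>k\<in>K. TT ! k = s6 \<and> (\<forall>(a, b)\<in>R. a \<noteq> k \<and> b \<noteq> k)"
      using K5[OF v] K7[OF v] unfolding K_def by blast
  qed
  have e1: "{q\<in>{..<length TT}. TT ! q = bar s6} = {q. q < length TT \<and> TT ! q = bar s6}" by auto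
  have e2: "{q\<in>{..<length TT}. TT ! q = s6} = {q. q < length TT \<and> TT ! q = s6}" by auto
  show ?thesis using zb cK cnt_TT tot_card unfolding e1 e2 by simp
qed

end

declare upt_Suc[simp del]

context wsetup begin

lemma gadget_cut:
  assumes v: "valid_structure bar TT R" and p12: "p1 \<le> p2" "p2 < length TT"
    and l1: "lab cs p1 = LX a1 c1" and l2: "lab cs p2 = LX a2 c2"
    and expo: "\<forall>(i, j)\<in>R. TT ! i \<in> gad \<longrightarrow> \<not> (i < p1 \<and> p1 < j) \<and> \<not> (i < p2 \<and> p2 < j)"
  shows "card (R5 R) + card (R7 R) + 2 * card (R6 R) + (max c1 c2 - min c1 c2) \<le> 2 * A * B + 3 * B"
proof -
  have p1l: "p1 < length TT" using p12 by simp
  note P1 = LX_pos[OF p1l l1] and P2 = LX_pos[OF p12(2) l2]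
  have sig1: "TT ! p1 \<in> \<Sigma>" using sym_lab[OF p1l] l1 by auto
  have sig2: "TT ! p2 \<in> \<Sigma>" using sym_lab[OF p12(2)] l2 by auto
  define K5s where "K5s = (\<lambda>p. snd p - 1) ` R5 R"
  define K7s where "K7s = (\<lambda>p. fst p + 1) ` R7 R"
  define Ra where "Ra = {p \<in> R6 R. snd p < p1}"
  define Rb where "Rb = {p \<in> R6 R. p1 < fst p \<and> snd p < p2}"
  define Rc where "Rc = {p \<in> R6 R. p2 < fst p}"
  have gadR6: "TT ! i \<in> gad \<and> TT ! j \<in> gad" if "(i, j) \<in> R6 R" for i j
  proof -
    have "(i, j) \<in> R" "TT ! i = s6 \<or> TT ! i = bar s6" using that by (auto simp: R6_def)
    moreover then have "TT ! j = bar (TT ! i)" using vfacts[OF v] by blast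
    ultimately show ?thesis by (auto simp: gad_def bar_inv)
  qed
  have cover: "R6 R \<subseteq> Ra \<union> Rb \<union> Rc"
  proof
    fix p assume p: "p \<in> R6 R"
    obtain i j where ij: "p = (i, j)" by (cases p)
    have pr: "(i, j) \<in> R" "i < j" using p ij vfacts[OF v] by (auto simp: R6_def)
    have g: "TT ! i \<in> gad" "TT ! j \<in> gad" using gadR6 p ij by auto
    have ne: "i \<noteq> p1" "j \<noteq> p1" "i \<noteq> p2" "j \<noteq> p2"
      using g sig1 sig2 gad_notSigma by auto
    have e: "\<not> (i < p1 \<and> p1 < j)" "\<not> (i < p2 \<and> p2 < j)" using expo pr(1) g(1) by auto
    show "p \<in> Ra \<union> Rb \<union> Rc" using ne e pr(2) p ij by (auto simp: Ra_def Rb_def Rc_def)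
  qed
  have finR: "finite (R6 R)" using valid_finite[OF v] by (auto simp: R6_def)
  have c6: "card (R6 R) \<le> card Ra + card Rb + card Rc"
  proof -
    have "card (R6 R) \<le> card (Ra \<union> Rb \<union> Rc)"
      using cover finR by (intro card_mono) (auto simp: Ra_def Rb_def Rc_def)
    also have "\<dots> \<le> card Ra + card Rb + card Rc" by (meson card_Un_le add_le_mono order_trans le_refl)
    finally show ?thesis .
  qed
  have props: "\<forall>(i, j)\<in>R6 R. (TT ! i = s6 \<or> TT ! i = bar s6) \<and> i < j \<and> j < length TT"
    using R6_props[OF v] .
  note k5 = K5[OF v, folded K5s_def] and k7 = K7[OF v, folded K7s_def]
  have za: "card Ra \<le> card {q\<in>{q. q < p1}. TT ! q = bar s6} \<and> card Ra + card K5s \<le> card {q\<in>{q. q < p1}. TT ! q = s6}"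
  proof (rule zone_bound[OF v bar_inv dist(10)])
    show "Ra \<subseteq> R" by (auto simp: Ra_def R6_def)
    show "\<forall>(i, j)\<in>Ra. (TT ! i = s6 \<or> TT ! i = bar s6) \<and> i \<in> {q. q < p1} \<and> j \<in> {q. q < p1}"
      using props by (auto simp: Ra_def)
    show "finite {q. q < p1}" by simp
    show "K5s \<subseteq> {q. q < p1}" using k5 P1 by fastforce
    show "\<forall>k\<in>K5s. TT ! k = s6 \<and> (\<forall>(a, b)\<in>R. a \<noteq> k \<and> b \<noteq> k)" using k5 by blast
  qed
  have zb: "card Rb \<le> card {q\<in>{q. p1 < q \<and> q < p2}. TT ! q = bar s6} \<and> card Rb + card ({}::nat set) \<le> card {q\<in>{q. p1 < q \<and> q < p2}. TT ! q = s6}"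
  proof (rule zone_bound[where K="{}::nat set", OF v bar_inv dist(10)])
    show "Rb \<subseteq> R" by (auto simp: Rb_def R6_def)
    show "\<forall>(i, j)\<in>Rb. (TT ! i = s6 \<or> TT ! i = bar s6) \<and> i \<in> {q. p1 < q \<and> q < p2} \<and> j \<in> {q. p1 < q \<and> q < p2}"
      using props by (auto simp: Rb_def)
    show "finite {q. p1 < q \<and> q < p2}" by simp
  qed auto
  have zc: "card Rc \<le> card {q\<in>{q. p2 < q \<and> q < length TT}. TT ! q = bar s6} \<and> card Rc + card K7s \<le> card {q\<in>{q. p2 < q \<and> q < length TT}. TT ! q = s6}"
  proof (rule zone_bound[OF v bar_inv dist(10)])
    show "Rc \<subseteq> R" by (auto simp: Rc_def R6_def)
    show "\<forall>(i, j)\<in>Rc. (TT ! i = s6 \<or> TT ! i = bar s6) \<and> i \<in> {q. p2 < q \<and> q < length TT} \<and> j \<in> {q. p2 < q \<and> q < length TT}"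
      using props by (auto simp: Rc_def)
    show "finite {q. p2 < q \<and> q < length TT}" by simp
    show "K7s \<subseteq> {q. p2 < q \<and> q < length TT}" using k7 P2 len_TT by fastforce
    show "\<forall>k\<in>K7s. TT ! k = s6 \<and> (\<forall>(a, b)\<in>R. a \<noteq> k \<and> b \<noteq> k)" using k7 by blast
  qed
  have n6: "s6 \<notin> \<Sigma>" "bar s6 \<notin> \<Sigma>" using new_fresh by auto
  have s1: "card {q. q < p2 \<and> TT ! q = z} = card {q. q < p1 \<and> TT ! q = z} + card {q. p1 < q \<and> q < p2 \<and> TT ! q = z}"
    if "z \<notin> \<Sigma>" for z
    using card_split[of p1 p2 "\<lambda>q. TT ! q = z"] p12(1) sig1 that by auto
  have s2: "card {q. q < length TT \<and> TT ! q = z} = card {q. q < p2 \<and> TT ! q = z} + card {q. p2 < q \<and> q < length TT \<and> TT ! q = z}"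
    if "z \<notin> \<Sigma>" for z
    using card_split[of p2 "length TT" "\<lambda>q. TT ! q = z"] p12(2) sig2 that by auto
  have e1: "card {q. q < p1 \<and> TT ! q = z} = cnt z (concat (map snd (E1 a1 c1)))" if "z \<notin> \<Sigma>" for z
    using pref_cnt[OF p1l l1 that] .
  have e2: "card {q. q < p2 \<and> TT ! q = z} = cnt z (concat (map snd (E1 a2 c2)))" if "z \<notin> \<Sigma>" for z
    using pref_cnt[OF p12(2) l2 that] .
  note ce1 = cnt_E1[of a1 c1] and ce2 = cnt_E1[of a2 c2]
  define u1 where "u1 = card {q. q < p1 \<and> TT ! q = bar s6}"
  define u2 where "u2 = card {q. p1 < q \<and> q < p2 \<and> TT ! q = bar s6}"
  define u3 where "u3 = card {q. p2 < q \<and> q < length TT \<and> TT ! q = bar s6}"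
  define v1 where "v1 = card {q. q < p1 \<and> TT ! q = s6}"
  define v2 where "v2 = card {q. p1 < q \<and> q < p2 \<and> TT ! q = s6}"
  define v3 where "v3 = card {q. p2 < q \<and> q < length TT \<and> TT ! q = s6}"
  have eqs: "u1 + B = a1 * B + c1" "v1 = a1 * B" "u1 + u2 + B = a2 * B + c2" "v1 + v2 = a2 * B"
    "u1 + u2 + u3 = A * B + B" "v1 + v2 + v3 = A * B + 2 * B"
    using e1[OF n6(2)] e1[OF n6(1)] e2[OF n6(2)] e2[OF n6(1)] s1[OF n6(2)] s1[OF n6(1)]
      s2[OF n6(2)] s2[OF n6(1)] ce1 ce2 P1 P2 cnt_TT tot_card
    unfolding u1_def u2_def u3_def v1_def v2_def v3_def by auto
  have ineqs: "card Ra \<le> u1" "card Ra + card (R5 R) \<le> v1" "card Rb \<le> u2" "card Rb \<le> v2"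
    "card Rc \<le> u3" "card Rc + card (R7 R) \<le> v3"
    using za zb zc k5 k7 unfolding u1_def u2_def u3_def v1_def v2_def v3_def by auto
  show ?thesis
  proof (cases "c1 \<le> c2")
    case True
    then have "max c1 c2 - min c1 c2 = c2 - c1" by simp
    then show ?thesis using eqs ineqs c6 True by linarith
  next
    case False
    then have "max c1 c2 - min c1 c2 = c1 - c2" by simp
    then show ?thesis using eqs ineqs c6 False by linarith
  qed
qed

end

declare upt_Suc[simp del]

definition isX :: "lbl \<Rightarrow> bool" where "isX l = (case l of LX a c \<Rightarrow> True | _ \<Rightarrow> False)"

lemma sum_list_concat_map: "sum_list (map w (concat (map f l))) = sum_list (map (\<lambda>i. sum_list (map w (f i))) l)"
  by (induction l) auto

lemma sum_list_le: "(\<And>i. i \<in> set l \<Longrightarrow> g i \<le> (K::nat)) \<Longrightarrow> sum_list (map g l) \<le> length l * K"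
  by (induction l) (auto intro: add_mono)

lemma concat_if_none: "(\<And>c. c \<in> set l \<Longrightarrow> c \<noteq> b0) \<Longrightarrow> concat (map (\<lambda>c. if c = b0 then f c else []) l) = []"
  by (induction l) auto

context wsetup begin

lemma filt_chBs:
  assumes "\<not> P LG"
  shows "concat (map snd (filter (P \<circ> fst) (concat (map (chB a) l)))) =
    concat (map (\<lambda>c. if P (LX a c) then x a c else []) l)"
  using assms by (induction l) (auto simp: chB_def)

lemma filt_chAs:
  assumes "\<not> P LG"
  shows "concat (map snd (filter (P \<circ> fst) (concat (map chA l)))) =
    concat (map (\<lambda>a. concat (map (\<lambda>c. if P (LX a c) then x a c else []) [1..<B+1])) l)"
  using assms by (induction l) (auto simp: chA_def filt_chBs)

lemma filt_cs:
  assumes "\<not> P LG"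
  shows "concat (map snd (filter (P \<circ> fst) cs)) = (if P LY then y1 else []) @
    concat (map (\<lambda>a. concat (map (\<lambda>c. if P (LX a c) then x a c else []) [1..<B+1])) [1..<A+1]) @
    (if P LY then y2 else [])"
  using assms unfolding cs_def by (simp add: filt_chAs)

lemma filt_X: "concat (map snd (filter (isX \<circ> fst) cs)) =
    concat (map (\<lambda>a. concat (map (\<lambda>b. x a b) [1..<B+1])) [1..<A+1])"
  by (subst filt_cs) (auto simp: isX_def)

lemma filt_b0:
  assumes b0: "b0 \<in> {1..B}"
  shows "concat (map snd (filter ((\<lambda>l. l = LY \<or> (\<exists>a. l = LX a b0)) \<circ> fst) cs)) = y1 @ XX b0 @ y2"
proof -
  have inner: "concat (map (\<lambda>c. if c = b0 then x a c else []) [1..<B+1]) = x a b0" for a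
  proof -
    have h1: "concat (map (\<lambda>c. if c = b0 then x a c else []) [1..<b0]) = []"
      by (rule concat_if_none) auto
    have h2: "concat (map (\<lambda>c. if c = b0 then x a c else []) [b0+1..<B+1]) = []"
      by (rule concat_if_none) auto
    have e: "[1..<B+1] = [1..<b0] @ b0 # [b0+1..<B+1]" using upt_split[of b0 B] b0 by simp
    show ?thesis unfolding e map_append list.map concat_append concat.simps h1 h2 by simp
  qed
  show ?thesis by (subst filt_cs) (auto simp: inner[simplified])
qed

lemma nomatch_pos:
  assumes pq: "p < q" "q < length TT" and lp: "lab cs p = LX a c" and lq: "lab cs q = LX a' c'"
  shows "TT ! q \<noteq> bar (TT ! p)"
proof -
  obtain f where f: "strict_mono f"
    "\<forall>i<length (concat (map snd (filter (isX \<circ> fst) cs))).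
        f i < length (concat (map snd cs)) \<and>
        concat (map snd cs) ! (f i) = concat (map snd (filter (isX \<circ> fst) cs)) ! i"
    "\<forall>p<length (concat (map snd cs)). isX (lab cs p) \<longrightarrow>
        p \<in> f ` {..<length (concat (map snd (filter (isX \<circ> fst) cs)))}"
    using lab_emb by blast
  let ?X = "concat (map (\<lambda>a. concat (map (\<lambda>b. x a b) [1..<B+1])) [1..<A+1])"
  note f' = f[unfolded cs_T filt_X]
  have pl: "p < length (concat (map snd cs))" "q < length (concat (map snd cs))" using pq cs_T by auto
  have "p \<in> f ` {..<length ?X}" using f(3)[rule_format, OF pl(1)] lp unfolding filt_X by (simp add: isX_def)
  then obtain i where i: "i < length ?X" "p = f i" by auto
  have "q \<in> f ` {..<length ?X}" using f(3)[rule_format, OF pl(2)] lq unfolding filt_X by (simp add: isX_def)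
  then obtain j where j: "j < length ?X" "q = f j" by auto
  have "i < j" using pq i j f(1) by (simp add: strict_mono_less)
  then have "?X ! j \<noteq> bar (?X ! i)" using no_match j(1) unfolding Let_def by blast
  then show ?thesis using f'(2) i j by simp
qed

lemma expose:
  assumes v: "valid_structure bar TT R" and ij: "(i, j) \<in> R" and si: "TT ! i \<in> \<Sigma>"
    and e: "e = i \<or> e = j" and le: "lab cs e = LX a c"
  shows "\<forall>(i', j')\<in>R. TT ! i' \<in> gad \<longrightarrow> \<not> (i' < e \<and> e < j')"
proof (intro ballI impI, clarify)
  fix i' j' assume ij': "(i', j') \<in> R" and g: "TT ! i' \<in> gad" and lt: "i' < e" "e < j'"
  note f = vfacts[OF v ij] and f' = vfacts[OF v ij']
  have sj: "TT ! j \<in> \<Sigma>" using f(3) Sigma_closed si by simp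
  have el: "e < length TT" using e f by auto
  have ep: "oo + 3 * B \<le> e \<and> e < ee" using LX_pos[OF el le] by simp
  define ot where "ot = (if e = i then j else i)"
  have ol: "ot < length TT" using f by (auto simp: ot_def)
  have so: "TT ! ot \<in> \<Sigma>" using si sj by (auto simp: ot_def)
  have lo: "lab cs ot = LY"
  proof (cases "lab cs ot")
    case LY then show ?thesis .
  next
    case LG then show ?thesis using sym_lab[OF ol] so gad_notSigma by auto
  next
    case (LX a' c')
    show ?thesis
    proof (cases "e = i")
      case True
      then have "ot = j" "e \<noteq> j" using f(1) by (auto simp: ot_def)
      then show ?thesis using nomatch_pos[OF f(1,2)] le LX True f(3) by auto
    next
      case False
      then have "ot = i" "e = j" using e by (auto simp: ot_def)
      then show ?thesis using nomatch_pos[OF f(1,2)] le LX f(3) by auto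
    qed
  qed
  have lenG: "oo + length GG = ee + 4 * B" by (simp add: GG_eq len_pre0 len_post0)
  have oout: "ot < oo \<or> ee + 4 * B \<le> ot" using LY_out[OF ol lo] lenG by simp
  have gi: "oo \<le> i'" "i' < ee + 4 * B" using F_gad[of i'] g f' by auto
  have gj: "j' < ee + 4 * B" using F_gad[of j'] bar_gad[OF g] f' by auto
  have ne: "(i, j) \<noteq> (i', j')" using si g gad_notSigma by auto
  have nc: "\<not> crossing (i, j) (i', j')" using vcross[OF v ij ij' ne] .
  show False
  proof (cases "e = i")
    case True
    then have "ot = j" by (simp add: ot_def)
    then have "ee + 4 * B \<le> j" using oout f(1) True ep by auto
    then show False using nc True lt gj by (auto simp: crossing_def)
  next
    case False
    then have "ot = i" "e = j" using e by (auto simp: ot_def)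
    then have "i < oo" using oout f(1) ep by auto
    then show False using nc \<open>e = j\<close> lt gi by (auto simp: crossing_def)
  qed
qed

end

declare upt_Suc[simp del]

context wsetup begin

lemma sigma_bound:
  assumes v: "valid_structure bar TT R" and b0: "b0 \<in> {1..B}" and D: "finite D"
    and cov: "\<forall>(i, j)\<in>R. TT ! i \<in> \<Sigma> \<longrightarrow> (\<forall>e\<in>{i, j}. \<forall>a c. lab cs e = LX a c \<longrightarrow> c = b0 \<or> c \<in> D)"
  shows "wt w TT {p \<in> R. TT ! fst p \<in> \<Sigma>} \<le> WRNA bar w (y1 @ XX b0 @ y2) + card D * (A * W)"
proof -
  define RS where "RS = {p \<in> R. TT ! fst p \<in> \<Sigma>}"
  define isb where "isb e = (\<exists>a c. lab cs e = LX a c \<and> c \<noteq> b0)" for e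
  define RSb where "RSb = {p \<in> RS. \<not> isb (fst p) \<and> \<not> isb (snd p)}"
  define RSo where "RSo = RS - RSb"
  have finR: "finite R" using valid_finite[OF v] .
  have fin: "finite RSb" "finite RSo" using finR by (auto simp: RSb_def RSo_def RS_def)
  have RSu: "RS = RSb \<union> RSo" "RSb \<inter> RSo = {}" by (auto simp: RSo_def RSb_def)
  have wsplit: "wt w TT RS = wt w TT RSb + wt w TT RSo"
    using wt_union[OF fin RSu(2)] RSu(1) by simp
  have endp: "TT ! e \<in> \<Sigma> \<and> e < length TT" if "(i, j) \<in> RS" "e = i \<or> e = j" for i j e
  proof -
    have "(i, j) \<in> R" "TT ! i \<in> \<Sigma>" using that by (auto simp: RS_def)
    moreover have "i < j" "j < length TT" "TT ! j = bar (TT ! i)" using vfacts[OF v \<open>(i, j) \<in> R\<close>] by auto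
    ultimately show ?thesis using Sigma_closed that(2) by auto
  qed
  define P0 where "P0 = (\<lambda>l. l = LY \<or> (\<exists>a. l = LX a b0))"
  obtain f where f: "strict_mono f"
    "\<forall>i<length (concat (map snd (filter (P0 \<circ> fst) cs))).
        f i < length (concat (map snd cs)) \<and>
        concat (map snd cs) ! (f i) = concat (map snd (filter (P0 \<circ> fst) cs)) ! i"
    "\<forall>p<length (concat (map snd cs)). P0 (lab cs p) \<longrightarrow>
        p \<in> f ` {..<length (concat (map snd (filter (P0 \<circ> fst) cs)))}"
    using lab_emb by blast
  have fb: "concat (map snd (filter (P0 \<circ> fst) cs)) = y1 @ XX b0 @ y2"
    unfolding P0_def by (rule filt_b0[OF b0])
  note f' = f[unfolded cs_T fb]
  have vb: "valid_structure bar TT RSb"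
    by (rule valid_subset[OF v]) (auto simp: RSb_def RS_def)
  have covb: "\<forall>(i, j)\<in>RSb. i \<in> f ` {..<length (y1 @ XX b0 @ y2)} \<and> j \<in> f ` {..<length (y1 @ XX b0 @ y2)}"
  proof (clarify)
    fix i j assume ij: "(i, j) \<in> RSb"
    have "e \<in> f ` {..<length (y1 @ XX b0 @ y2)}" if "e = i \<or> e = j" for e
    proof -
      have e1: "TT ! e \<in> \<Sigma>" "e < length TT" using endp[of i j e] ij that by (auto simp: RSb_def)
      have "\<not> isb e" using ij that by (auto simp: RSb_def)
      moreover have "lab cs e \<noteq> LG" using sym_lab[OF e1(2)] e1(1) gad_notSigma by auto
      ultimately have "P0 (lab cs e)" unfolding P0_def isb_def by (cases "lab cs e") auto
      then show ?thesis using f'(3) e1(2) by blast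
    qed
    then show "i \<in> f ` {..<length (y1 @ XX b0 @ y2)} \<and> j \<in> f ` {..<length (y1 @ XX b0 @ y2)}" by blast
  qed
  have w1: "wt w TT RSb \<le> WRNA bar w (y1 @ XX b0 @ y2)"
    by (rule restrict[OF f(1) f'(2) vb covb])
  define PD where "PD = (\<lambda>l. \<exists>a c. l = LX a c \<and> c \<in> D)"
  obtain g where g: "strict_mono g"
    "\<forall>i<length (concat (map snd (filter (PD \<circ> fst) cs))).
        g i < length (concat (map snd cs)) \<and>
        concat (map snd cs) ! (g i) = concat (map snd (filter (PD \<circ> fst) cs)) ! i"
    "\<forall>p<length (concat (map snd cs)). PD (lab cs p) \<longrightarrow>
        p \<in> g ` {..<length (concat (map snd (filter (PD \<circ> fst) cs)))}"
    using lab_emb by blast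
  define T2 where "T2 = concat (map snd (filter (PD \<circ> fst) cs))"
  have T2: "T2 = concat (map (\<lambda>a. concat (map (\<lambda>c. if c \<in> D then x a c else []) [1..<B+1])) [1..<A+1])"
    unfolding T2_def by (subst filt_cs) (auto simp: PD_def)
  note g' = g[folded T2_def, unfolded cs_T]
  define ep where "ep p = (if isb (fst p) then fst p else snd p)" for p :: "nat \<times> nat"
  have epX: "ep p \<in> g ` {..<length T2} \<and> w (TT ! fst p) = w (TT ! ep p)" if "p \<in> RSo" for p
  proof -
    obtain i j where ij: "p = (i, j)" by (cases p)
    have pr: "(i, j) \<in> R" "TT ! i \<in> \<Sigma>" "isb i \<or> isb j" using that ij by (auto simp: RSo_def RSb_def RS_def)
    have e: "ep p = i \<or> ep p = j" "isb (ep p)" using pr(3) ij by (auto simp: ep_def)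
    have el: "ep p < length TT" using e(1) vfacts[OF v pr(1)] by auto
    obtain a c where ac: "lab cs (ep p) = LX a c" "c \<noteq> b0" using e(2) by (auto simp: isb_def)
    have "c \<in> D" using cov pr(1,2) e(1) ac by fastforce
    then have "PD (lab cs (ep p))" using ac by (auto simp: PD_def)
    then have "ep p \<in> g ` {..<length T2}" using g'(3) el by blast
    moreover have "w (TT ! i) = w (TT ! j)" using vfacts[OF v pr(1)] w_bar by simp
    ultimately show ?thesis using e(1) ij by auto
  qed
  have inj: "inj_on ep RSo"
  proof (rule inj_onI)
    fix p q assume pq: "p \<in> RSo" "q \<in> RSo" "ep p = ep q"
    have "p \<in> R" "q \<in> R" using pq by (auto simp: RSo_def RS_def)
    moreover have "fst p = fst q \<or> fst p = snd q \<or> snd p = fst q \<or> snd p = snd q"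
      using pq(3) unfolding ep_def by (auto split: if_splits)
    ultimately show "p = q" using share[OF v] by blast
  qed
  have ginj: "inj_on g {..<length T2}" using g(1) strict_mono_imp_inj_on by blast
  have "wt w TT RSo = (\<Sum>p\<in>RSo. w (TT ! ep p))"
    unfolding wt_def by (rule sum.cong) (use epX in auto)
  also have "\<dots> = (\<Sum>e\<in>ep ` RSo. w (TT ! e))" using inj by (simp add: sum.reindex)
  also have "\<dots> \<le> (\<Sum>e\<in>g ` {..<length T2}. w (TT ! e))"
    by (rule sum_mono2) (use epX in auto)
  also have "\<dots> = (\<Sum>i<length T2. w (TT ! g i))" using ginj by (simp add: sum.reindex)
  also have "\<dots> = (\<Sum>i<length T2. w (T2 ! i))" using g'(2) by (intro sum.cong) auto
  also have "\<dots> = sum_list (map w T2)"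
    by (simp add: sum_list_sum_nth atLeast0LessThan)
  also have "\<dots> \<le> card D * (A * W)"
  proof -
    have row: "sum_list (map w (concat (map (\<lambda>c. if c \<in> D then x a c else []) [1..<B+1]))) \<le> card D * W"
      if a: "a \<in> set [1..<A+1]" for a
    proof -
      have "sum_list (map w (concat (map (\<lambda>c. if c \<in> D then x a c else []) [1..<B+1])))
          = sum_list (map (\<lambda>c. if c \<in> D then sum_list (map w (x a c)) else 0) [1..<B+1])"
        unfolding sum_list_concat_map by (intro arg_cong[where f=sum_list] map_cong) auto
      also have "\<dots> = (\<Sum>c\<in>{1..<B+1}. if c \<in> D then sum_list (map w (x a c)) else 0)"
        by (simp add: sum_list_distinct_conv_sum_set)
      also have "\<dots> = (\<Sum>c\<in>{c \<in> {1..<B+1}. c \<in> D}. sum_list (map w (x a c)))"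
        by (rule sum.inter_filter[symmetric]) simp
      also have "\<dots> \<le> card {c \<in> {1..<B+1}. c \<in> D} * W"
      proof -
        have "\<And>c. c \<in> {c \<in> {1..<B+1}. c \<in> D} \<Longrightarrow> sum_list (map w (x a c)) \<le> W"
          using x_weight a by auto
        from sum_bounded_above[of "{c \<in> {1..<B+1}. c \<in> D}" "\<lambda>c. sum_list (map w (x a c))" W, OF this]
        show ?thesis by simp
      qed
      also have "\<dots> \<le> card D * W"
        by (intro mult_le_mono1 card_mono D) auto
      finally show ?thesis .
    qed
    have "sum_list (map w T2) = sum_list (map (\<lambda>a. sum_list (map w (concat (map (\<lambda>c. if c \<in> D then x a c else []) [1..<B+1])))) [1..<A+1])"
      unfolding T2 sum_list_concat_map ..
    also have "\<dots> \<le> length [1..<A+1] * (card D * W)" by (rule sum_list_le) (rule row)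
    finally show ?thesis by (simp add: algebra_simps)
  qed
  finally have w2: "wt w TT RSo \<le> card D * (A * W)" .
  show ?thesis using wsplit w1 w2 unfolding RS_def by simp
qed

end

declare upt_Suc[simp del]

lemma final_arith:
  fixes n5 n6 n7 wRS M cD d K N :: nat
  assumes "n5 + n7 + 2 * n6 + d \<le> N" "wRS \<le> M + cD * K" "cD \<le> d"
  shows "n5 * (4 * K) + n6 * (8 * K) + n7 * (4 * K) + wRS \<le> 4 * K * N + M"
proof -
  define U where "U = n5 + n7 + 2 * n6"
  have e: "n5 * (4 * K) + n6 * (8 * K) + n7 * (4 * K) = 4 * K * U" by (simp add: U_def algebra_simps)
  have a0: "cD * K \<le> d * K" using assms(3) by (rule mult_le_mono1)
  have "d * K \<le> 4 * K * d" by simp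
  then have a1: "cD * K \<le> 4 * K * d" using a0 by linarith
  have a2: "4 * K * (U + d) \<le> 4 * K * N" using assms(1) U_def by (intro mult_le_mono2) simp
  have a3: "4 * K * (U + d) = 4 * K * U + 4 * K * d" by (simp add: algebra_simps)
  show ?thesis using e a1 a2 a3 assms(2) by linarith
qed

context wsetup begin

lemma wt_const:
  assumes "\<forall>p\<in>S. w (TT ! fst p) = k"
  shows "wt w TT S = card S * k"
proof -
  have "wt w TT S = (\<Sum>p\<in>S. k)" unfolding wt_def using assms by (intro sum.cong) auto
  then show ?thesis by simp
qed

theorem main_loc:
  "WRNA bar w TT = (8 * A + 12) * A * B * W + Max ((\<lambda>b. WRNA bar w (y1 @ XX b @ y2)) ` {1..B})"
proof -
  define Ms where "Ms = (\<lambda>b. WRNA bar w (y1 @ XX b @ y2)) ` {1..B}"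
  define M where "M = Max Ms"
  have fMs: "finite Ms" "Ms \<noteq> {}" using B by (auto simp: Ms_def)
  have Mge: "WRNA bar w (y1 @ XX b @ y2) \<le> M" if "b \<in> {1..B}" for b
    unfolding M_def using fMs that by (intro Max_ge) (auto simp: Ms_def)
  have rho: "(8 * A + 12) * A * B * W = 4 * (A * W) * (2 * A * B + 3 * B)" by (simp add: algebra_simps)
  have ge: "(8 * A + 12) * A * B * W + M \<le> WRNA bar w TT"
  proof -
    have "M \<in> Ms" unfolding M_def using fMs by (rule Max_in)
    then obtain b where b: "b \<in> {1..B}" "M = WRNA bar w (y1 @ XX b @ y2)" by (auto simp: Ms_def)
    then show ?thesis using lower[of b] by auto
  qed
  obtain R where R: "valid_structure bar TT R" "wt w TT R = WRNA bar w TT" using WRNA_attain by blast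
  note v = R(1)
  define RS where "RS = {p \<in> R. TT ! fst p \<in> \<Sigma>}"
  have finR: "finite R" using valid_finite[OF v] .
  have fst_len: "fst p < length TT" if "p \<in> R" for p
    using that vfacts[OF v, of "fst p" "snd p"] by auto
  have Rdec: "R = ((R5 R \<union> R6 R) \<union> R7 R) \<union> RS"
  proof
    show "R \<subseteq> ((R5 R \<union> R6 R) \<union> R7 R) \<union> RS"
    proof
      fix p assume p: "p \<in> R"
      then have "TT ! fst p \<in> \<Sigma> \<or> TT ! fst p \<in> gad" using sym_cases fst_len by blast
      then show "p \<in> ((R5 R \<union> R6 R) \<union> R7 R) \<union> RS" using p by (auto simp: R5_def R6_def R7_def RS_def gad_def)
    qed
  qed (auto simp: R5_def R6_def R7_def RS_def)
  have fins: "finite (R5 R)" "finite (R6 R)" "finite (R7 R)" "finite RS"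
    using finR by (auto simp: R5_def R6_def R7_def RS_def)
  have djs: "R5 R \<inter> R6 R = {}" "(R5 R \<union> R6 R) \<inter> R7 R = {}" "((R5 R \<union> R6 R) \<union> R7 R) \<inter> RS = {}"
    using dist new_fresh by (auto simp: R5_def R6_def R7_def RS_def)
  have wR: "wt w TT R = wt w TT (R5 R) + wt w TT (R6 R) + wt w TT (R7 R) + wt w TT RS"
    using fins djs by (subst Rdec) (simp add: wt_union)
  have w5': "wt w TT (R5 R) = card (R5 R) * (4 * (A * W))"
    by (rule wt_const) (auto simp: R5_def w5 w_bar)
  have w6': "wt w TT (R6 R) = card (R6 R) * (8 * (A * W))"
    by (rule wt_const) (auto simp: R6_def w6 w_bar)
  have w7': "wt w TT (R7 R) = card (R7 R) * (4 * (A * W))"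
    by (rule wt_const) (auto simp: R7_def w7 w_bar)
  define C where "C = {c. \<exists>i j. (i, j) \<in> R \<and> TT ! i \<in> \<Sigma> \<and> (\<exists>e\<in>{i, j}. \<exists>a. lab cs e = LX a c)}"
  have CB: "C \<subseteq> {1..B}"
  proof
    fix c assume "c \<in> C"
    then obtain i j e a where "(i, j) \<in> R" "e \<in> {i, j}" "lab cs e = LX a c" by (auto simp: C_def)
    moreover then have "e < length TT" using vfacts[OF v] by fastforce
    ultimately show "c \<in> {1..B}" using lab_X by blast
  qed
  have finC: "finite C" using CB finite_subset by blast
  have le: "WRNA bar w TT \<le> (8 * A + 12) * A * B * W + M"
  proof (cases "C = {}")
    case True
    have cov: "\<forall>(i, j)\<in>R. TT ! i \<in> \<Sigma> \<longrightarrow> (\<forall>e\<in>{i, j}. \<forall>a c. lab cs e = LX a c \<longrightarrow> c = 1 \<or> c \<in> {})"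
      using True unfolding C_def by blast
    have s: "wt w TT RS \<le> WRNA bar w (y1 @ XX 1 @ y2) + card ({}::nat set) * (A * W)"
      unfolding RS_def by (rule sigma_bound[OF v _ _ cov]) (use B in auto)
    have "WRNA bar w (y1 @ XX 1 @ y2) \<le> M" using Mge B by auto
    then have s': "wt w TT RS \<le> M + 0 * (A * W)" using s by simp
    have gn: "card (R5 R) + card (R7 R) + 2 * card (R6 R) + 0 \<le> 2 * A * B + 3 * B"
      using gadget_nocut[OF v] by simp
    have "WRNA bar w TT \<le> 4 * (A * W) * (2 * A * B + 3 * B) + M"
      using final_arith[OF gn s'] R(2) wR w5' w6' w7' by linarith
    then show ?thesis by (simp only: rho)
  next
    case False
    define cmin where "cmin = Min C"
    define cmax where "cmax = Max C"
    have cin: "cmin \<in> C" "cmax \<in> C" using finC False by (auto simp: cmin_def cmax_def)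
    have cbd: "cmin \<le> c \<and> c \<le> cmax" if "c \<in> C" for c using finC that by (auto simp: cmin_def cmax_def)
    define D where "D = C - {cmin}"
    have cov: "\<forall>(i, j)\<in>R. TT ! i \<in> \<Sigma> \<longrightarrow> (\<forall>e\<in>{i, j}. \<forall>a c. lab cs e = LX a c \<longrightarrow> c = cmin \<or> c \<in> D)"
      unfolding D_def C_def by blast
    have s: "wt w TT RS \<le> WRNA bar w (y1 @ XX cmin @ y2) + card D * (A * W)"
      unfolding RS_def by (rule sigma_bound[OF v _ _ cov]) (use CB cin finC in \<open>auto simp: D_def\<close>)
    have "WRNA bar w (y1 @ XX cmin @ y2) \<le> M" using Mge CB cin by auto
    then have s': "wt w TT RS \<le> M + card D * (A * W)" using s by simp
    have cD: "card D \<le> cmax - cmin"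
    proof -
      have "D \<subseteq> {cmin<..cmax}"
      proof
        fix c assume "c \<in> D"
        then have "c \<in> C" "c \<noteq> cmin" by (auto simp: D_def)
        with cbd[OF this(1)] show "c \<in> {cmin<..cmax}" by auto
      qed
      then have "card D \<le> card {cmin<..cmax}" by (intro card_mono) auto
      then show ?thesis by simp
    qed
    obtain i1 j1 e1 a1 where E1: "(i1, j1) \<in> R" "TT ! i1 \<in> \<Sigma>" "e1 = i1 \<or> e1 = j1" "lab cs e1 = LX a1 cmin"
      using cin(1) unfolding C_def by blast
    obtain i2 j2 e2 a2 where E2: "(i2, j2) \<in> R" "TT ! i2 \<in> \<Sigma>" "e2 = i2 \<or> e2 = j2" "lab cs e2 = LX a2 cmax"
      using cin(2) unfolding C_def by blast
    have x1: "\<forall>(i, j)\<in>R. TT ! i \<in> gad \<longrightarrow> \<not> (i < e1 \<and> e1 < j)" by (rule expose[OF v E1])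
    have x2: "\<forall>(i, j)\<in>R. TT ! i \<in> gad \<longrightarrow> \<not> (i < e2 \<and> e2 < j)" by (rule expose[OF v E2])
    have l1: "e1 < length TT" "e2 < length TT"
      using E1(3) E2(3) vfacts[OF v E1(1)] vfacts[OF v E2(1)] by auto
    have expo: "\<forall>(i, j)\<in>R. TT ! i \<in> gad \<longrightarrow> \<not> (i < min e1 e2 \<and> min e1 e2 < j) \<and> \<not> (i < max e1 e2 \<and> max e1 e2 < j)"
      using x1 x2 by (auto simp: min_def max_def)
    have mm: "cmin \<le> cmax" using cbd cin by auto
    have gc: "card (R5 R) + card (R7 R) + 2 * card (R6 R) + (cmax - cmin) \<le> 2 * A * B + 3 * B"
    proof (cases "e1 \<le> e2")
      case True
      have "card (R5 R) + card (R7 R) + 2 * card (R6 R) + (max cmin cmax - min cmin cmax) \<le> 2 * A * B + 3 * B"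
        by (rule gadget_cut[OF v True l1(2) E1(4) E2(4)]) (use expo True in \<open>simp add: min_def max_def\<close>)
      then show ?thesis using mm by simp
    next
      case False
      then have F: "e2 \<le> e1" by simp
      have "card (R5 R) + card (R7 R) + 2 * card (R6 R) + (max cmax cmin - min cmax cmin) \<le> 2 * A * B + 3 * B"
        by (rule gadget_cut[OF v F l1(1) E2(4) E1(4)]) (use expo F False in \<open>simp add: min_def max_def\<close>)
      then show ?thesis using mm by simp
    qed
    have "WRNA bar w TT \<le> 4 * (A * W) * (2 * A * B + 3 * B) + M"
      using final_arith[OF gc s' cD] R(2) wR w5' w6' w7' by linarith
    then show ?thesis by (simp only: rho)
  qed
  have "WRNA bar w TT = (8 * A + 12) * A * B * W + M" using antisym[OF le ge] .
  then show ?thesis unfolding M_def Ms_def .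
qed

end

theorem mainTheorem11:
  fixes bar :: "'a \<Rightarrow> 'a" and w :: "'a \<Rightarrow> nat" and \<Sigma> :: "'a set"
    and A B W :: nat and x :: "nat \<Rightarrow> nat \<Rightarrow> 'a list" and s5 s6 s7 :: 'a
    and y1 y2 :: "'a list"
  assumes bar_inv: "\<And>\<sigma>. bar (bar \<sigma>) = \<sigma>"
    and w_bar: "\<And>\<sigma>. w (bar \<sigma>) = w \<sigma>"
    and Sigma_closed: "\<And>\<sigma>. \<sigma> \<in> \<Sigma> \<Longrightarrow> bar \<sigma> \<in> \<Sigma>"
    and A: "A \<ge> 1" and B: "B \<ge> 1" and W: "W \<ge> 1"
    and x_Sigma: "\<And>a b. a \<in> {1..A} \<Longrightarrow> b \<in> {1..B} \<Longrightarrow> set (x a b) \<subseteq> \<Sigma>"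
    and x_weight: "\<And>a b. a \<in> {1..A} \<Longrightarrow> b \<in> {1..B} \<Longrightarrow> sum_list (map w (x a b)) \<le> W"
    and no_match: "let X = concat (map (\<lambda>a. concat (map (\<lambda>b. x a b) [1..<B+1])) [1..<A+1])
                   in \<forall>i j. i < j \<and> j < length X \<longrightarrow> X ! j \<noteq> bar (X ! i)"
    and new_distinct: "distinct [s5, bar s5, s6, bar s6, s7, bar s7]"
    and new_fresh: "s5 \<notin> \<Sigma>" "bar s5 \<notin> \<Sigma>" "s6 \<notin> \<Sigma>" "bar s6 \<notin> \<Sigma>"
                   "s7 \<notin> \<Sigma>" "bar s7 \<notin> \<Sigma>"
    and w5: "w s5 = 4 * A * W" and w6: "w s6 = 8 * A * W" and w7: "w s7 = 4 * A * W"
    and y1_Sigma: "set y1 \<subseteq> \<Sigma>" and y2_Sigma: "set y2 \<subseteq> \<Sigma>"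
  shows "WRNA bar w (y1 @ G bar s5 s6 s7 A B x @ y2) =
         (8 * A + 12) * A * B * W +
         Max ((\<lambda>b. WRNA bar w (y1 @ concat (map (\<lambda>a. x a b) [1..<A+1]) @ y2)) ` {1..B})"
proof -
  interpret wsetup bar w \<Sigma> A B W x s5 s6 s7 y1 y2
    by (rule wsetup.intro) (fact assms)+
  show ?thesis by (rule main_loc)
qed

end
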